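(* Let $\kappa<\lambda$ be infinite regular cardinals. Then $\mathbb{P}(\lambda,\kappa)$ is $\lambda$-strategically closed.
   Context: For a set $C$ of ordinals, $C'=\{\alpha\in C\mid\sup(C\cap\alpha)=\alpha\}$. $\mathbb{P}(\lambda,\kappa)$ consists of conditions $p=\langle C^p_{\alpha,i}\mid\alpha\le\gamma^p,\ i(\alpha)^p\le i<\kappa\rangle$ such that: (1) $\gamma^p<\lambda$ is a limit ordinal and for all limit $\alpha\le\gamma^p$, $i(\alpha)^p<\kappa$; (2) for limit $\alpha\le\gamma^p$ and $i(\alpha)^p\le i<\kappa$, $C^p_{\alpha,i}$ is club in $\alpha$; (3) for limit $\alpha\le\gamma^p$ and $i(\alpha)^p\le i<j<\kappa$, $C^p_{\alpha,i}\subseteq C^p_{\alpha,j}$; (4) for limit $\alpha<\beta\le\gamma^p$ and $i(\beta)^p\le i<\kappa$, if $\alpha\in(C^p_{\beta,i})'$ then $i(\alpha)^p\le i$ and $C^p_{\beta,i}\cap\alpha=C^p_{\alpha,i}$; (5) for limit $\alpha<\beta\le\gamma^p$ there is $i<\kappa$ with $\alpha\in(C^p_{\beta,i})'$. The order is end-extension: $q\le p$ iff $\gamma^q\ge\gamma^p$ and for all limit $\alpha\le\gamma^p$, $i(\alpha)^q=i(\alpha)^p$ and $C^q_{\alpha,i}=C^p_{\alpha,i}$ for $i(\alpha)^p\le i<\kappa$. For a poset $\mathbb{P}$ and ordinal $\beta$, the game $G_\beta(\mathbb{P})$: players I and II alternately choose a decreasing sequence $\langle p_\alpha\mid\alpha<\beta\rangle$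 in $\mathbb{P}$ with $p_0=\mathbb{1}_{\mathbb{P}}$; I plays at odd stages and II at even stages (including all limit stages); I wins if at some even stage $\alpha<\beta$ II cannot play, otherwise II wins. $\mathbb{P}$ is $\beta$-strategically closed if II has a winning strategy in $G_\beta(\mathbb{P})$. *)

theory Defs
  imports Main
begin

text \<open>Ordinals below lambda are represented by the elements of a type 'a carrying
a well-order r (non-strict) on UNIV whose order type is lambda.\<close>

definition olt :: "'a rel \<Rightarrow> 'a \<Rightarrow> 'a \<Rightarrow> bool" where
  "olt r a b \<equiv> (a, b) \<in> r \<and> a \<noteq> b"

definition ozero :: "'a rel \<Rightarrow> 'a \<Rightarrow> bool" where
  "ozero r a \<equiv> (\<forall>b. (a, b) \<in> r)"

definition oLimit :: "'a rel \<Rightarrow> 'a \<Rightarrow> bool" where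
  "oLimit r a \<equiv> \<not> ozero r a \<and> (\<forall>b. olt r b a \<longrightarrow> (\<exists>c. olt r b c \<and> olt r c a))"

definition oSucc :: "'a rel \<Rightarrow> 'a \<Rightarrow> 'a \<Rightarrow> bool" where
  "oSucc r a b \<equiv> olt r a b \<and> \<not> (\<exists>c. olt r a c \<and> olt r c b)"

inductive oEven :: "'a rel \<Rightarrow> 'a \<Rightarrow> bool" for r where
  base: "ozero r a \<or> oLimit r a \<Longrightarrow> oEven r a"
| step: "oEven r a \<Longrightarrow> oSucc r a b \<Longrightarrow> oSucc r b c \<Longrightarrow> oEven r c"

text \<open>sup (C \<inter> a) = a\<close>
definition supEq :: "'a rel \<Rightarrow> 'a set \<Rightarrow> 'a \<Rightarrow> bool" where
  "supEq r C a \<equiv> (\<forall>b. olt r b a \<longrightarrow> (\<exists>c\<in>C. olt r b c \<and> olt r c a))"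

definition derivedSet :: "'a rel \<Rightarrow> 'a set \<Rightarrow> 'a set" where
  "derivedSet r C = {a \<in> C. supEq r C a}"

definition clubIn :: "'a rel \<Rightarrow> 'a set \<Rightarrow> 'a \<Rightarrow> bool" where
  "clubIn r C a \<equiv> C \<subseteq> {b. olt r b a}
     \<and> (\<forall>b. olt r b a \<longrightarrow> (\<exists>c\<in>C. olt r b c))
     \<and> (\<forall>b. olt r b a \<longrightarrow> \<not> ozero r b \<longrightarrow> supEq r C b \<longrightarrow> b \<in> C)"

text \<open>A condition is a triple (gamma, i(.), C(.,.)); outside the relevant indices the
entries are normalised (i = undefined, C = {}) so that conditions are canonical.
The ordinal kappa is represented by the element k (kappa = order type below k).\<close>
type_synonym 'a cond = "'a \<times> ('a \<Rightarrow> 'a) \<times> ('a \<Rightarrow> 'a \<Rightarrow> 'a set)"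

definition gam :: "'a cond \<Rightarrow> 'a" where "gam p = fst p"
definition idx :: "'a cond \<Rightarrow> 'a \<Rightarrow> 'a" where "idx p = fst (snd p)"
definition cl :: "'a cond \<Rightarrow> 'a \<Rightarrow> 'a \<Rightarrow> 'a set" where "cl p = snd (snd p)"

definition inP :: "'a rel \<Rightarrow> 'a \<Rightarrow> 'a cond \<Rightarrow> bool" where
  "inP r k p \<equiv>
     (ozero r (gam p) \<or> oLimit r (gam p))
   \<and> (\<forall>a. oLimit r a \<and> (a, gam p) \<in> r \<longrightarrow>
          olt r (idx p a) k
        \<and> (\<forall>i. (idx p a, i) \<in> r \<and> olt r i k \<longrightarrow> clubIn r (cl p a i) a)
        \<and> (\<forall>i j. (idx p a, i) \<in> r \<and> olt r i j \<and> olt r j k \<longrightarrow> cl p a i \<subseteq> cl p a j)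
        \<and> (\<forall>i. \<not> ((idx p a, i) \<in> r \<and> olt r i k) \<longrightarrow> cl p a i = {}))
   \<and> (\<forall>a b. oLimit r a \<and> oLimit r b \<and> olt r a b \<and> (b, gam p) \<in> r \<longrightarrow>
          (\<forall>i. (idx p b, i) \<in> r \<and> olt r i k \<and> a \<in> derivedSet r (cl p b i) \<longrightarrow>
               (idx p a, i) \<in> r \<and> cl p b i \<inter> {d. olt r d a} = cl p a i))
   \<and> (\<forall>a b. oLimit r a \<and> oLimit r b \<and> olt r a b \<and> (b, gam p) \<in> r \<longrightarrow>
          (\<exists>i. (idx p b, i) \<in> r \<and> olt r i k \<and> a \<in> derivedSet r (cl p b i)))
   \<and> (\<forall>a. \<not> (oLimit r a \<and> (a, gam p) \<in> r) \<longrightarrow> idx p a = undefined \<and> (\<forall>i. cl p a i = {}))"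

definition PP :: "'a rel \<Rightarrow> 'a \<Rightarrow> 'a cond set" where
  "PP r k = {p. inP r k p}"

definition leP :: "'a rel \<Rightarrow> 'a \<Rightarrow> 'a cond \<Rightarrow> 'a cond \<Rightarrow> bool" where
  "leP r k q p \<equiv> (gam p, gam q) \<in> r
     \<and> (\<forall>a. oLimit r a \<and> (a, gam p) \<in> r \<longrightarrow>
          idx q a = idx p a \<and> (\<forall>i. (idx p a, i) \<in> r \<and> olt r i k \<longrightarrow> cl q a i = cl p a i))"

definition oneP :: "'a rel \<Rightarrow> 'a cond" where
  "oneP r = ((SOME z. ozero r z), (\<lambda>_. undefined), (\<lambda>_ _. {}))"

text \<open>The game G_lambda(P) of length lambda = order type of r.  A strategy for II maps a
stage a and the history (restricted to stages below a) to a condition.\<close>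
definition hist :: "'a rel \<Rightarrow> ('a \<Rightarrow> 'c) \<Rightarrow> 'a \<Rightarrow> ('a \<Rightarrow> 'c)" where
  "hist r h a = (\<lambda>d. if olt r d a then h d else undefined)"

definition legalPartial ::
  "'a rel \<Rightarrow> 'c set \<Rightarrow> ('c \<Rightarrow> 'c \<Rightarrow> bool) \<Rightarrow> 'c \<Rightarrow> ('a \<Rightarrow> ('a \<Rightarrow> 'c) \<Rightarrow> 'c)
     \<Rightarrow> ('a \<Rightarrow> 'c) \<Rightarrow> 'a \<Rightarrow> bool" where
  "legalPartial r P le one \<sigma> h a \<equiv>
     (\<forall>d. olt r d a \<longrightarrow> h d \<in> P)
   \<and> (\<forall>d d'. olt r d d' \<and> olt r d' a \<longrightarrow> le (h d') (h d))
   \<and> (\<forall>d. olt r d a \<longrightarrow> ozero r d \<longrightarrow> h d = one)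
   \<and> (\<forall>d. olt r d a \<longrightarrow> oEven r d \<longrightarrow> \<not> ozero r d \<longrightarrow> h d = \<sigma> d (hist r h d))"

definition winningII ::
  "'a rel \<Rightarrow> 'c set \<Rightarrow> ('c \<Rightarrow> 'c \<Rightarrow> bool) \<Rightarrow> 'c \<Rightarrow> ('a \<Rightarrow> ('a \<Rightarrow> 'c) \<Rightarrow> 'c) \<Rightarrow> bool" where
  "winningII r P le one \<sigma> \<equiv>
     \<forall>h a. oEven r a \<and> \<not> ozero r a \<and> legalPartial r P le one \<sigma> h a \<longrightarrow>
        \<sigma> a (hist r h a) \<in> P \<and> (\<forall>d. olt r d a \<longrightarrow> le (\<sigma> a (hist r h a)) (h d))"

definition strategically_closed ::
  "'a rel \<Rightarrow> 'c set \<Rightarrow> ('c \<Rightarrow> 'c \<Rightarrow> bool) \<Rightarrow> 'c \<Rightarrow> bool" where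
  "strategically_closed r P le one \<equiv> (\<exists>\<sigma>. winningII r P le one \<sigma>)"

end

theory Submission
  imports Defs
begin

unbundle cardinal_syntax



locale W =
  fixes r :: "'a rel"
  assumes wo: "well_order_on UNIV r"
begin

abbreviation lt where "lt a b \<equiv> olt r a b"
abbreviation le where "le a b \<equiv> (a,b) \<in> r"

lemma le_refl[simp]: "le a a"
  using wo unfolding well_order_on_def linear_order_on_def partial_order_on_def preorder_on_def refl_on_def by auto

lemma le_trans: "le a b \<Longrightarrow> le b c \<Longrightarrow> le a c"
  using wo unfolding well_order_on_def linear_order_on_def partial_order_on_def preorder_on_def trans_def by blast

lemma le_antisym: "le a b \<Longrightarrow> le b a \<Longrightarrow> a = b"
  using wo unfolding well_order_on_def linear_order_on_def partial_order_on_def antisym_def by blast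

lemma le_total: "le a b \<or> le b a"
proof (cases "a=b")
  case False thus ?thesis using wo unfolding well_order_on_def linear_order_on_def total_on_def by simp
qed simp

lemma not_le: "\<not> le a b \<longleftrightarrow> lt b a"
proof
  assume "\<not> le a b" thus "lt b a" unfolding olt_def using le_total[of a b] le_refl[of a] by auto
next
  assume "lt b a" thus "\<not> le a b" unfolding olt_def using le_antisym[of a b] by auto
qed

lemma not_lt: "\<not> lt a b \<longleftrightarrow> le b a"
  using not_le[of b a] by auto

lemma lt_trans: "lt a b \<Longrightarrow> lt b c \<Longrightarrow> lt a c"
  unfolding olt_def using le_trans[of a b c] le_antisym[of a b] by auto

lemma lt_le_trans: "lt a b \<Longrightarrow> le b c \<Longrightarrow> lt a c"
  unfolding olt_def using le_trans[of a b c] le_antisym[of a b] by auto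

lemma le_lt_trans: "le a b \<Longrightarrow> lt b c \<Longrightarrow> lt a c"
  unfolding olt_def using le_trans[of a b c] le_antisym[of b c] by auto

lemma lt_imp_le: "lt a b \<Longrightarrow> le a b" unfolding olt_def by simp

lemma lt_irrefl[simp]: "\<not> lt a a" unfolding olt_def by simp

lemma lt_asym: "lt a b \<Longrightarrow> \<not> lt b a" using lt_trans[of a b a] by auto

lemma lt_linear: "lt a b \<or> a = b \<or> lt b a"
  using not_lt[of a b] unfolding olt_def by auto

lemma wf_lt: "wf {(a,b). lt a b}"
proof -
  have "{(a,b). lt a b} = r - Id" unfolding olt_def by auto
  thus ?thesis using wo unfolding well_order_on_def by simp
qed

lemma lt_induct[case_names less]:
  assumes "\<And>x. (\<And>y. lt y x \<Longrightarrow> P y) \<Longrightarrow> P x" shows "P a"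
proof (induct a rule: wf_induct[OF wf_lt])
  case (1 x)
  show ?case by (rule assms) (use 1 in simp)
qed

lemma ex_min: "P x \<Longrightarrow> \<exists>m. P m \<and> (\<forall>y. P y \<longrightarrow> le m y)"
proof -
  assume "P x"
  hence "x \<in> {x. P x}" by simp
  then obtain m where m1': "m \<in> {x. P x}" and m2': "\<And>y. (y, m) \<in> {(a,b). lt a b} \<Longrightarrow> y \<notin> {x. P x}"
    by (rule wfE_min[OF wf_lt]) blast
  have m1: "P m" using m1' by simp
  have m2: "\<And>y. lt y m \<Longrightarrow> \<not> P y" using m2' by simp
  show ?thesis
  proof (intro exI conjI allI impI)
    show "P m" by fact
    fix y assume "P y" thus "le m y" using m2 not_lt by blast
  qed
qed


lemma ozero_iff: "ozero r a \<longleftrightarrow> (\<forall>b. le a b)" unfolding ozero_def by simp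

lemma ex_zero: "\<exists>z. ozero r z"
  using ex_min[of "\<lambda>_. True" undefined] unfolding ozero_def by blast

lemma zero_unique: "ozero r a \<Longrightarrow> ozero r b \<Longrightarrow> a = b"
  unfolding ozero_def using le_antisym by blast

lemma zero_not_gt: "ozero r a \<Longrightarrow> \<not> lt b a"
  unfolding ozero_def using not_lt by blast

lemma lt_not_zero: "lt b a \<Longrightarrow> \<not> ozero r a"
  using zero_not_gt by blast

lemma oSucc_unique1: "oSucc r b a \<Longrightarrow> oSucc r b' a \<Longrightarrow> b = b'"
  unfolding oSucc_def using lt_linear by blast

lemma oSucc_unique2: "oSucc r a b \<Longrightarrow> oSucc r a b' \<Longrightarrow> b = b'"
  unfolding oSucc_def using lt_linear by blast

lemma oSucc_not_limit: "oSucc r b a \<Longrightarrow> \<not> oLimit r a"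
  unfolding oSucc_def oLimit_def by blast

lemma oSucc_not_zero: "oSucc r b a \<Longrightarrow> \<not> ozero r a"
  unfolding oSucc_def using lt_not_zero by blast

lemma oSucc_lt: "oSucc r b a \<Longrightarrow> lt b a"
  unfolding oSucc_def by blast

lemma oSucc_least: "oSucc r b a \<Longrightarrow> lt b y \<Longrightarrow> le a y"
  unfolding oSucc_def using not_le by blast

lemma oSucc_pred_le: "oSucc r b a \<Longrightarrow> lt y a \<Longrightarrow> le y b"
  unfolding oSucc_def using not_le by blast

lemma nonlimit_pred: "\<not> ozero r a \<Longrightarrow> \<not> oLimit r a \<Longrightarrow> \<exists>b. oSucc r b a"
  unfolding oLimit_def oSucc_def by blast

lemma limit_succ_lt: "oLimit r a \<Longrightarrow> lt b a \<Longrightarrow> oSucc r b s \<Longrightarrow> lt s a"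
proof -
  assume a: "oLimit r a" "lt b a" "oSucc r b s"
  then obtain c where "lt b c" "lt c a" unfolding oLimit_def by blast
  hence "le s c" using oSucc_least a(3) by blast
  thus "lt s a" using \<open>lt c a\<close> le_lt_trans by blast
qed

lemma even_or_odd: "oEven r x \<or> (\<exists>e. oEven r e \<and> oSucc r e x)"
proof (induct x rule: lt_induct)
  case (less x)
  show ?case
  proof (cases "ozero r x \<or> oLimit r x")
    case True thus ?thesis using oEven.base[OF True] by simp
  next
    case False
    then obtain p where p: "oSucc r p x" using nonlimit_pred by blast
    have "oEven r p \<or> (\<exists>e. oEven r e \<and> oSucc r e p)" using less[OF oSucc_lt[OF p]] .
    thus ?thesis
    proof
      assume "oEven r p" thus ?thesis using p by (intro disjI2 exI conjI)
    next
      assume "\<exists>e. oEven r e \<and> oSucc r e p"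
      then obtain e where "oEven r e" "oSucc r e p" by blast
      hence "oEven r x" using oEven.step[OF _ _ p] by blast
      thus ?thesis by simp
    qed
  qed
qed

lemma even_cases: assumes "oEven r a" shows "ozero r a \<or> oLimit r a \<or> (\<exists>b c. oEven r c \<and> oSucc r c b \<and> oSucc r b a)"
  using assms
proof (cases rule: oEven.cases)
  case step thus ?thesis by blast
qed blast

lemma succ_even_not_even: "oEven r x \<Longrightarrow> oSucc r x y \<Longrightarrow> \<not> oEven r y"
proof (induct x arbitrary: y rule: lt_induct)
  case (less x)
  note IH = less.hyps and ex = less.prems(1) and sxy = less.prems(2)
  show ?case
  proof
    assume "oEven r y"
    from even_cases[OF this] show False
    proof (elim disjE exE conjE)
      assume "ozero r y" thus False using oSucc_not_zero[OF sxy] by simp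
    next
      assume "oLimit r y" thus False using oSucc_not_limit[OF sxy] by simp
    next
      fix v w assume w: "oEven r w" "oSucc r w v" "oSucc r v y"
      have vx: "v = x" using oSucc_unique1[OF w(3) sxy] .
      have "lt w x" using oSucc_lt[OF w(2)] vx by simp
      have "\<not> oEven r x" using IH[OF \<open>lt w x\<close> w(1)] w(2) vx by simp
      thus False using ex by simp
    qed
  qed
qed

end

locale W2 = W +
  fixes k :: 'a
  assumes co: "card_order r" and reg: "regularCard r" and kinf: "infinite (underS r k)"
begin

lemma Field_r: "Field r = UNIV"
  using co card_order_on_Card_order by blast

lemma Cord: "Card_order r"
  using co card_order_on_Card_order by blast

lemma small_bounded:
  assumes "|S| <o r" shows "\<exists>b. \<forall>s\<in>S. le s b"
proof -
  have "\<not> cofinal S r"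
  proof
    assume "cofinal S r"
    hence "|S| =o r" using reg Field_r unfolding regularCard_def by blast
    thus False using assms not_ordLess_ordIso by blast
  qed
  hence "\<not> (\<forall>a\<in>Field r. \<exists>b\<in>S. a \<noteq> b \<and> le a b)" unfolding cofinal_def .
  then obtain a where "\<not> (\<exists>b\<in>S. a \<noteq> b \<and> le a b)" by blast
  hence "\<forall>b\<in>S. \<not> (a \<noteq> b \<and> le a b)" by blast
  have "\<forall>s\<in>S. le s a"
  proof
    fix s assume "s \<in> S"
    hence "\<not> (a \<noteq> s \<and> le a s)" using \<open>\<forall>b\<in>S. _\<close> by blast
    thus "le s a"
    proof (cases "s = a")
      case False thus ?thesis using \<open>\<not> (a \<noteq> s \<and> le a s)\<close> not_le lt_imp_le by blast
    qed simp
  qed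
  thus ?thesis by blast
qed

lemma underS_small: "|underS r a| <o r"
  using card_of_underS[OF Cord] Field_r by blast

lemma ex_lim_above: "\<exists>L. oLimit r L \<and> lt x L"
proof (rule ccontr)
  assume nl: "\<not> (\<exists>L. oLimit r L \<and> lt x L)"
  define B where "B = {y. le x y}"
  define F where "F y = {w. le x w \<and> le w y}" for y
  have finF: "finite (F y)" for y
  proof (induct y rule: lt_induct)
    case (less y)
    show ?case
    proof (cases "lt x y")
      case False
      hence yx: "le y x" using not_lt[of x y] by simp
      have "F y \<subseteq> {x}"
      proof
        fix w assume "w \<in> F y"
        hence w: "le x w" "le w y" unfolding F_def by auto
        have "le w x" using le_trans[OF w(2) yx] .
        thus "w \<in> {x}" using le_antisym[OF w(1)] by simp
      qed
      thus ?thesis by (rule finite_subset) simp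
    next
      case True
      have "\<not> ozero r y" using lt_not_zero[OF True] .
      moreover have "\<not> oLimit r y" using nl True by blast
      ultimately obtain p where p: "oSucc r p y" using nonlimit_pred by blast
      have "F y \<subseteq> F p \<union> {y}"
      proof
        fix w assume "w \<in> F y"
        hence w: "le x w" "le w y" unfolding F_def by auto
        show "w \<in> F p \<union> {y}"
        proof (cases "w = y")
          case False
          hence "lt w y" using w(2) unfolding olt_def by simp
          hence "le w p" using oSucc_pred_le[OF p] by blast
          thus ?thesis using w(1) unfolding F_def by simp
        qed simp
      qed
      moreover have "finite (F p)" using less(1)[OF oSucc_lt[OF p]] .
      ultimately show ?thesis using finite_subset[of "F y" "F p \<union> {y}"] by simp
    qed
  qed
  define g where "g y = card (F y)" for y
  have psub: "F y \<subset> F y'" if yy: "lt y y'" and xy: "le x y" for y y'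
  proof -
    have "F y \<subseteq> F y'"
    proof
      fix w assume "w \<in> F y" thus "w \<in> F y'" unfolding F_def using le_trans[OF _ lt_imp_le[OF yy]] by simp
    qed
    moreover have "y' \<notin> F y" unfolding F_def using not_le[of y' y] yy by simp
    moreover have "y' \<in> F y'" unfolding F_def using le_trans[OF xy lt_imp_le[OF yy]] by simp
    ultimately show ?thesis by blast
  qed
  have "inj_on g B"
  proof (rule inj_onI)
    fix y y' assume yB: "y \<in> B" "y' \<in> B" and eq: "g y = g y'"
    show "y = y'"
    proof (rule ccontr)
      assume ne: "y \<noteq> y'"
      have "lt y y' \<or> lt y' y" using ne lt_linear by blast
      thus False
      proof
        assume "lt y y'"
        hence "g y < g y'" unfolding g_def using psubset_card_mono[OF finF psub] yB unfolding B_def by simp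
        thus False using eq by simp
      next
        assume "lt y' y"
        hence "g y' < g y" unfolding g_def using psubset_card_mono[OF finF psub] yB unfolding B_def by simp
        thus False using eq by simp
      qed
    qed
  qed
  hence Bc: "|B| \<le>o |UNIV :: nat set|" using card_of_ordLeq[of B "UNIV :: nat set"] by blast
  define A where "A = underS r x"
  have AB: "A \<union> B = UNIV"
  proof (intro set_eqI iffI)
    fix y show "y \<in> A \<union> B"
    proof (cases "le x y")
      case False thus ?thesis using not_le[of x y] unfolding A_def underS_def olt_def by simp
    qed (simp add: B_def)
  qed simp
  show False
  proof (cases "finite A")
    case True
    have "underS r k \<subseteq> A \<union> F k"
    proof
      fix w assume "w \<in> underS r k"
      hence wk: "le w k" unfolding underS_def by simp
      show "w \<in> A \<union> F k"
      proof (cases "le x w")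
        case True thus ?thesis using wk unfolding F_def by simp
      next
        case False thus ?thesis using not_le[of x w] unfolding A_def underS_def olt_def by simp
      qed
    qed
    thus False using kinf True finF finite_subset by blast
  next
    case False
    have "|UNIV :: nat set| \<le>o |A|" using False infinite_iff_card_of_nat by blast
    hence "|B| \<le>o |A|" using Bc ordLeq_transitive by blast
    moreover have "|A| \<le>o |A|" using ordLeq_refl card_of_Card_order by blast
    ultimately have "|A \<union> B| \<le>o |A|"
      using card_of_Un_ordLeq_infinite_Field[of "|A|" A B] False Field_card_of card_of_Card_order by metis
    hence "|UNIV :: 'a set| \<le>o |A|" using AB by simp
    moreover have "|A| <o r" unfolding A_def using underS_small .
    moreover have "r =o |UNIV :: 'a set|" using card_of_Field_ordIso[OF Cord] Field_r ordIso_symmetric by metis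
    ultimately have "r <o r" using ordIso_ordLeq_trans ordLeq_ordLess_trans by blast
    thus False using ordLess_irreflexive by blast
  qed
qed

end




context W begin

lemma supEq_mono: "supEq r C x \<Longrightarrow> C \<subseteq> D \<Longrightarrow> supEq r D x"
  unfolding supEq_def by blast

lemma derived_mono: "x \<in> derivedSet r C \<Longrightarrow> C \<subseteq> D \<Longrightarrow> x \<in> derivedSet r D"
  unfolding derivedSet_def using supEq_mono by blast

lemma supEq_restrict:
  assumes "le x y" shows "supEq r (C \<inter> {d. lt d y}) x \<longleftrightarrow> supEq r C x"
proof
  assume "supEq r (C \<inter> {d. lt d y}) x" thus "supEq r C x" unfolding supEq_def by blast
next
  assume a: "supEq r C x"
  show "supEq r (C \<inter> {d. lt d y}) x" unfolding supEq_def
  proof (intro allI impI)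
    fix b assume "lt b x"
    then obtain c where c: "c \<in> C" "lt b c" "lt c x" using a unfolding supEq_def by blast
    have "lt c y" using lt_le_trans[OF c(3) assms] .
    thus "\<exists>c\<in>C \<inter> {d. lt d y}. lt b c \<and> lt c x" using c by blast
  qed
qed

lemma derived_restrict:
  assumes "lt x y" "D = C \<inter> {d. lt d y}"
  shows "x \<in> derivedSet r D \<longleftrightarrow> x \<in> derivedSet r C"
  using supEq_restrict[OF lt_imp_le[OF assms(1)], of C] assms unfolding derivedSet_def by auto

lemma club_sub: "clubIn r C a \<Longrightarrow> c \<in> C \<Longrightarrow> lt c a"
  unfolding clubIn_def by blast

lemma club_supEq: "clubIn r C a \<Longrightarrow> supEq r C a"
  unfolding clubIn_def supEq_def by blast

lemma club_closed: "clubIn r C a \<Longrightarrow> lt b a \<Longrightarrow> \<not> ozero r b \<Longrightarrow> supEq r C b \<Longrightarrow> b \<in> C"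
  unfolding clubIn_def by blast

lemma club_unb: "clubIn r C a \<Longrightarrow> lt b a \<Longrightarrow> \<exists>c\<in>C. lt b c"
  unfolding clubIn_def by blast

lemma clubI:
  assumes "\<And>c. c \<in> C \<Longrightarrow> lt c a"
    and "\<And>b. lt b a \<Longrightarrow> \<exists>c\<in>C. lt b c"
    and "\<And>b. lt b a \<Longrightarrow> \<not> ozero r b \<Longrightarrow> supEq r C b \<Longrightarrow> b \<in> C"
  shows "clubIn r C a"
  unfolding clubIn_def using assms by blast

lemma limit_not_zero: "oLimit r a \<Longrightarrow> \<not> ozero r a"
  unfolding oLimit_def by simp

lemma limit_dense: "oLimit r a \<Longrightarrow> lt b a \<Longrightarrow> \<exists>c. lt b c \<and> lt c a"
  unfolding oLimit_def by blast

lemma limit_in_derived: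
  assumes "clubIn r C a" "oLimit r a" "a \<in> D" "C \<subseteq> D"
  shows "a \<in> derivedSet r D"
  unfolding derivedSet_def using supEq_mono[OF club_supEq[OF assms(1)] assms(4)] assms(3) by simp

lemma inP_D:
  assumes "inP r k p"
  shows P0: "ozero r (gam p) \<or> oLimit r (gam p)"
    and P1: "oLimit r a \<Longrightarrow> le a (gam p) \<Longrightarrow> lt (idx p a) k"
    and P2: "oLimit r a \<Longrightarrow> le a (gam p) \<Longrightarrow> le (idx p a) i \<Longrightarrow> lt i k \<Longrightarrow> clubIn r (cl p a i) a"
    and P3: "oLimit r a \<Longrightarrow> le a (gam p) \<Longrightarrow> le (idx p a) i \<Longrightarrow> lt i j \<Longrightarrow> lt j k \<Longrightarrow> cl p a i \<subseteq> cl p a j"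
    and P4: "oLimit r a \<Longrightarrow> le a (gam p) \<Longrightarrow> \<not> (le (idx p a) i \<and> lt i k) \<Longrightarrow> cl p a i = {}"
    and P5: "oLimit r a \<Longrightarrow> oLimit r b \<Longrightarrow> lt a b \<Longrightarrow> le b (gam p) \<Longrightarrow> le (idx p b) i \<Longrightarrow> lt i k \<Longrightarrow>
              a \<in> derivedSet r (cl p b i) \<Longrightarrow> le (idx p a) i \<and> cl p b i \<inter> {d. lt d a} = cl p a i"
    and P6: "oLimit r a \<Longrightarrow> oLimit r b \<Longrightarrow> lt a b \<Longrightarrow> le b (gam p) \<Longrightarrow>
              \<exists>i. le (idx p b) i \<and> lt i k \<and> a \<in> derivedSet r (cl p b i)"
    and P7: "\<not> (oLimit r a \<and> le a (gam p)) \<Longrightarrow> idx p a = undefined"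
    and P7': "\<not> (oLimit r a \<and> le a (gam p)) \<Longrightarrow> cl p a i = {}"
proof -
  note A = assms[unfolded inP_def]
  note A0 = conjunct1[OF A]
  note A1 = conjunct1[OF conjunct2[OF A]]
  note A5 = conjunct1[OF conjunct2[OF conjunct2[OF A]]]
  note A6 = conjunct1[OF conjunct2[OF conjunct2[OF conjunct2[OF A]]]]
  note A7 = conjunct2[OF conjunct2[OF conjunct2[OF conjunct2[OF A]]]]
  show "ozero r (gam p) \<or> oLimit r (gam p)" using A0 .
  {
    assume la: "oLimit r a" "le a (gam p)"
    have B: "lt (idx p a) k
        \<and> (\<forall>i. (idx p a, i) \<in> r \<and> olt r i k \<longrightarrow> clubIn r (cl p a i) a)
        \<and> (\<forall>i j. (idx p a, i) \<in> r \<and> olt r i j \<and> olt r j k \<longrightarrow> cl p a i \<subseteq> cl p a j)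
        \<and> (\<forall>i. \<not> ((idx p a, i) \<in> r \<and> olt r i k) \<longrightarrow> cl p a i = {})"
      using spec[OF A1, of a] la by simp
    show "lt (idx p a) k" using conjunct1[OF B] .
    show "le (idx p a) i \<Longrightarrow> lt i k \<Longrightarrow> clubIn r (cl p a i) a"
      using spec[OF conjunct1[OF conjunct2[OF B]], of i] by simp
    show "le (idx p a) i \<Longrightarrow> lt i j \<Longrightarrow> lt j k \<Longrightarrow> cl p a i \<subseteq> cl p a j"
      using spec[OF spec[OF conjunct1[OF conjunct2[OF conjunct2[OF B]]], of i], of j] by simp
    show "\<not> (le (idx p a) i \<and> lt i k) \<Longrightarrow> cl p a i = {}"
      using spec[OF conjunct2[OF conjunct2[OF conjunct2[OF B]]], of i] by simp
  }
  {
    assume la: "oLimit r a" "oLimit r b" "lt a b" "le b (gam p)"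
    have B: "\<forall>i. (idx p b, i) \<in> r \<and> olt r i k \<and> a \<in> derivedSet r (cl p b i) \<longrightarrow>
               (idx p a, i) \<in> r \<and> cl p b i \<inter> {d. olt r d a} = cl p a i"
      using spec[OF spec[OF A5, of a], of b] la by simp
    show "le (idx p b) i \<Longrightarrow> lt i k \<Longrightarrow>
              a \<in> derivedSet r (cl p b i) \<Longrightarrow> le (idx p a) i \<and> cl p b i \<inter> {d. lt d a} = cl p a i"
      using spec[OF B, of i] by simp
    show "\<exists>i. le (idx p b) i \<and> lt i k \<and> a \<in> derivedSet r (cl p b i)"
      using spec[OF spec[OF A6, of a], of b] la by simp
  }
  {
    assume la: "\<not> (oLimit r a \<and> le a (gam p))"
    have B: "idx p a = undefined \<and> (\<forall>i. cl p a i = {})" using spec[OF A7, of a] la by simp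
    show "idx p a = undefined" using B by simp
    show "cl p a i = {}" using B by simp
  }
qed

lemma inP_I:
  assumes "ozero r (gam p) \<or> oLimit r (gam p)"
    and "\<And>a. oLimit r a \<Longrightarrow> le a (gam p) \<Longrightarrow> lt (idx p a) k"
    and "\<And>a i. oLimit r a \<Longrightarrow> le a (gam p) \<Longrightarrow> le (idx p a) i \<Longrightarrow> lt i k \<Longrightarrow> clubIn r (cl p a i) a"
    and "\<And>a i j. oLimit r a \<Longrightarrow> le a (gam p) \<Longrightarrow> le (idx p a) i \<Longrightarrow> lt i j \<Longrightarrow> lt j k \<Longrightarrow> cl p a i \<subseteq> cl p a j"
    and "\<And>a i. oLimit r a \<Longrightarrow> le a (gam p) \<Longrightarrow> \<not> (le (idx p a) i \<and> lt i k) \<Longrightarrow> cl p a i = {}"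
    and "\<And>a b i. oLimit r a \<Longrightarrow> oLimit r b \<Longrightarrow> lt a b \<Longrightarrow> le b (gam p) \<Longrightarrow> le (idx p b) i \<Longrightarrow> lt i k \<Longrightarrow>
              a \<in> derivedSet r (cl p b i) \<Longrightarrow> le (idx p a) i \<and> cl p b i \<inter> {d. lt d a} = cl p a i"
    and "\<And>a b. oLimit r a \<Longrightarrow> oLimit r b \<Longrightarrow> lt a b \<Longrightarrow> le b (gam p) \<Longrightarrow>
              \<exists>i. le (idx p b) i \<and> lt i k \<and> a \<in> derivedSet r (cl p b i)"
    and "\<And>a. \<not> (oLimit r a \<and> le a (gam p)) \<Longrightarrow> idx p a = undefined \<and> (\<forall>i. cl p a i = {})"
  shows "inP r k p"
  unfolding inP_def
proof (intro conjI allI impI)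
  show "ozero r (gam p) \<or> oLimit r (gam p)" by fact
next
  fix a assume "oLimit r a \<and> le a (gam p)"
  thus "lt (idx p a) k" using assms(2)[of a] by simp
next
  fix a i assume "oLimit r a \<and> le a (gam p)" "le (idx p a) i \<and> lt i k"
  thus "clubIn r (cl p a i) a" using assms(3)[of a i] by simp
next
  fix a i j assume "oLimit r a \<and> le a (gam p)" "le (idx p a) i \<and> lt i j \<and> lt j k"
  thus "cl p a i \<subseteq> cl p a j" using assms(4)[of a i j] by simp
next
  fix a i assume "oLimit r a \<and> le a (gam p)" "\<not> (le (idx p a) i \<and> lt i k)"
  thus "cl p a i = {}" using assms(5)[of a i] by simp
next
  fix a b i assume "oLimit r a \<and> oLimit r b \<and> lt a b \<and> le b (gam p)"
    "le (idx p b) i \<and> lt i k \<and> a \<in> derivedSet r (cl p b i)"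
  thus "le (idx p a) i" using assms(6)[of a b i] by simp
next
  fix a b i assume "oLimit r a \<and> oLimit r b \<and> lt a b \<and> le b (gam p)"
    "le (idx p b) i \<and> lt i k \<and> a \<in> derivedSet r (cl p b i)"
  thus "cl p b i \<inter> {d. lt d a} = cl p a i" using assms(6)[of a b i] by simp
next
  fix a b assume "oLimit r a \<and> oLimit r b \<and> lt a b \<and> le b (gam p)"
  thus "\<exists>i. le (idx p b) i \<and> lt i k \<and> a \<in> derivedSet r (cl p b i)" using assms(7)[of a b] by simp
next
  fix a assume "\<not> (oLimit r a \<and> le a (gam p))"
  thus "idx p a = undefined" using assms(8)[of a] by simp
next
  fix a i assume "\<not> (oLimit r a \<and> le a (gam p))"
  thus "cl p a i = {}" using assms(8)[of a] by simp
qed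

lemma P3': "inP r k p \<Longrightarrow> oLimit r a \<Longrightarrow> le a (gam p) \<Longrightarrow> le (idx p a) i \<Longrightarrow> le i j \<Longrightarrow> lt j k \<Longrightarrow> cl p a i \<subseteq> cl p a j"
proof -
  assume a: "inP r k p" "oLimit r a" "le a (gam p)" "le (idx p a) i" "le i j" "lt j k"
  show ?thesis
  proof (cases "i = j")
    case False hence "lt i j" using a(5) unfolding olt_def by simp
    thus ?thesis using P3[OF a(1) a(2) a(3) a(4) _ a(6)] by blast
  qed simp
qed

lemma le_agree:
  assumes p: "inP r k p" and q: "inP r k q" and qp: "leP r k q p" and x: "le x (gam p)"
  shows "idx q x = idx p x" and "cl q x = cl p x"
proof -
  have g: "le (gam p) (gam q)" using qp unfolding leP_def by simp
  have xq: "le x (gam q)" using le_trans[OF x g] .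
  have "idx q x = idx p x \<and> cl q x = cl p x"
  proof (cases "oLimit r x")
    case True
    have i: "idx q x = idx p x" using qp True x unfolding leP_def by blast
    have "cl q x i = cl p x i" for i
    proof (cases "le (idx p x) i \<and> lt i k")
      case True thus ?thesis using qp \<open>oLimit r x\<close> x unfolding leP_def by blast
    next
      case False
      have "cl p x i = {}" using P4[OF p \<open>oLimit r x\<close> x False] .
      moreover have "cl q x i = {}" using P4[OF q \<open>oLimit r x\<close> xq] False i by simp
      ultimately show ?thesis by simp
    qed
    thus ?thesis using i by blast
  next
    case False
    thus ?thesis using P7[OF p, of x] P7[OF q, of x] P7'[OF p, of x] P7'[OF q, of x] by auto
  qed
  thus "idx q x = idx p x" and "cl q x = cl p x" by auto
qed

lemma agree_le:
  assumes "le (gam p) (gam q)" and "\<And>x. le x (gam p) \<Longrightarrow> idx q x = idx p x \<and> cl q x = cl p x"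
  shows "leP r k q p"
  unfolding leP_def using assms by simp

lemma top_ext:
  assumes g: "oLimit r \<gamma>" "gam q = \<gamma>"
  and H1: "\<And>b. oLimit r b \<Longrightarrow> lt b \<gamma> \<Longrightarrow> \<exists>p. inP r k p \<and> le b (gam p) \<and> (\<forall>y. le y b \<longrightarrow> idx q y = idx p y \<and> cl q y = cl p y)"
  and H2: "\<And>x. \<not> (oLimit r x \<and> le x \<gamma>) \<Longrightarrow> idx q x = undefined \<and> (\<forall>i. cl q x i = {})"
  and H3a: "lt (idx q \<gamma>) k"
  and H3b: "\<And>i. le (idx q \<gamma>) i \<Longrightarrow> lt i k \<Longrightarrow> clubIn r (cl q \<gamma> i) \<gamma>"
  and H3c: "\<And>i j. le (idx q \<gamma>) i \<Longrightarrow> lt i j \<Longrightarrow> lt j k \<Longrightarrow> cl q \<gamma> i \<subseteq> cl q \<gamma> j"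
  and H3d: "\<And>i. \<not> (le (idx q \<gamma>) i \<and> lt i k) \<Longrightarrow> cl q \<gamma> i = {}"
  and H4: "\<And>a i. oLimit r a \<Longrightarrow> lt a \<gamma> \<Longrightarrow> le (idx q \<gamma>) i \<Longrightarrow> lt i k \<Longrightarrow> a \<in> derivedSet r (cl q \<gamma> i) \<Longrightarrow>
              le (idx q a) i \<and> cl q \<gamma> i \<inter> {d. lt d a} = cl q a i"
  and H5: "\<And>a. oLimit r a \<Longrightarrow> lt a \<gamma> \<Longrightarrow> \<exists>i. le (idx q \<gamma>) i \<and> lt i k \<and> a \<in> derivedSet r (cl q \<gamma> i)"
  shows "inP r k q"
proof (rule inP_I)
  show "ozero r (gam q) \<or> oLimit r (gam q)" using g by simp
next
  fix a assume a: "oLimit r a" "le a (gam q)"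
  show "lt (idx q a) k"
  proof (cases "a = \<gamma>")
    case True thus ?thesis using H3a by simp
  next
    case False hence "lt a \<gamma>" using a g unfolding olt_def by simp
    then obtain p where p: "inP r k p" "le a (gam p)" "\<forall>y. le y a \<longrightarrow> idx q y = idx p y \<and> cl q y = cl p y"
      using H1 a by blast
    thus ?thesis using P1[OF p(1) a(1) p(2)] by simp
  qed
next
  fix a i assume a: "oLimit r a" "le a (gam q)" "le (idx q a) i" "lt i k"
  show "clubIn r (cl q a i) a"
  proof (cases "a = \<gamma>")
    case True thus ?thesis using H3b a by simp
  next
    case False hence "lt a \<gamma>" using a g unfolding olt_def by simp
    then obtain p where p: "inP r k p" "le a (gam p)" "\<forall>y. le y a \<longrightarrow> idx q y = idx p y \<and> cl q y = cl p y"
      using H1 a by blast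
    thus ?thesis using P2[OF p(1) a(1) p(2), of i] a by simp
  qed
next
  fix a i j assume a: "oLimit r a" "le a (gam q)" "le (idx q a) i" "lt i j" "lt j k"
  show "cl q a i \<subseteq> cl q a j"
  proof (cases "a = \<gamma>")
    case True thus ?thesis using H3c a by simp
  next
    case False hence "lt a \<gamma>" using a g unfolding olt_def by simp
    then obtain p where p: "inP r k p" "le a (gam p)" "\<forall>y. le y a \<longrightarrow> idx q y = idx p y \<and> cl q y = cl p y"
      using H1 a by blast
    thus ?thesis using P3[OF p(1) a(1) p(2), of i j] a by simp
  qed
next
  fix a i assume a: "oLimit r a" "le a (gam q)" "\<not> (le (idx q a) i \<and> lt i k)"
  show "cl q a i = {}"
  proof (cases "a = \<gamma>")
    case True thus ?thesis using H3d a by simp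
  next
    case False hence "lt a \<gamma>" using a g unfolding olt_def by simp
    then obtain p where p: "inP r k p" "le a (gam p)" "\<forall>y. le y a \<longrightarrow> idx q y = idx p y \<and> cl q y = cl p y"
      using H1 a by blast
    thus ?thesis using P4[OF p(1) a(1) p(2), of i] a by simp
  qed
next
  fix a b i assume a: "oLimit r a" "oLimit r b" "lt a b" "le b (gam q)" "le (idx q b) i" "lt i k"
    "a \<in> derivedSet r (cl q b i)"
  show "le (idx q a) i \<and> cl q b i \<inter> {d. lt d a} = cl q a i"
  proof (cases "b = \<gamma>")
    case True thus ?thesis using H4[of a i] a g lt_le_trans by blast
  next
    case False hence "lt b \<gamma>" using a g unfolding olt_def by simp
    then obtain p where p: "inP r k p" "le b (gam p)" "\<forall>y. le y b \<longrightarrow> idx q y = idx p y \<and> cl q y = cl p y"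
      using H1 a by blast
    have ab: "le a b" using lt_imp_le[OF a(3)] .
    have e1: "idx q b = idx p b" "cl q b = cl p b" using p(3) by auto
    have e2: "idx q a = idx p a" "cl q a = cl p a" using p(3) ab by auto
    show ?thesis using P5[OF p(1) a(1) a(2) a(3) p(2), of i] a e1 e2 by simp
  qed
next
  fix a b assume a: "oLimit r a" "oLimit r b" "lt a b" "le b (gam q)"
  show "\<exists>i. le (idx q b) i \<and> lt i k \<and> a \<in> derivedSet r (cl q b i)"
  proof (cases "b = \<gamma>")
    case True thus ?thesis using H5[of a] a g by simp
  next
    case False hence "lt b \<gamma>" using a g unfolding olt_def by simp
    then obtain p where p: "inP r k p" "le b (gam p)" "\<forall>y. le y b \<longrightarrow> idx q y = idx p y \<and> cl q y = cl p y"
      using H1 a by blast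
    have e1: "idx q b = idx p b" "cl q b = cl p b" using p(3) by auto
    show ?thesis using P6[OF p(1) a(1) a(2) a(3) p(2)] e1 by simp
  qed
next
  fix a assume "\<not> (oLimit r a \<and> le a (gam q))"
  thus "idx q a = undefined \<and> (\<forall>i. cl q a i = {})" using H2 g by simp
qed

end

context W2 begin

lemma ex_succ: "\<exists>s. oSucc r x s"
proof -
  obtain L where L: "oLimit r L" "lt x L" using ex_lim_above by blast
  obtain m where m: "lt x m" "\<And>y. lt x y \<Longrightarrow> le m y" using ex_min[of "\<lambda>y. lt x y", OF L(2)] by blast
  have "oSucc r x m" unfolding oSucc_def
  proof (intro conjI notI)
    show "lt x m" by fact
    assume "\<exists>c. lt x c \<and> lt c m"
    then obtain c where c: "lt x c" "lt c m" by blast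
    have "le m c" using m(2)[OF c(1)] .
    thus False using c(2) not_le by blast
  qed
  thus ?thesis by blast
qed

definition NL where "NL x = (SOME L. oLimit r L \<and> lt x L \<and> (\<forall>L'. oLimit r L' \<and> lt x L' \<longrightarrow> le L L'))"

lemma NL_props: "oLimit r (NL x)" "lt x (NL x)" "\<And>y. lt x y \<Longrightarrow> lt y (NL x) \<Longrightarrow> \<not> oLimit r y"
proof -
  obtain L where L: "oLimit r L" "lt x L" using ex_lim_above by blast
  obtain m where m: "oLimit r m \<and> lt x m" "\<And>y. oLimit r y \<and> lt x y \<Longrightarrow> le m y"
    using ex_min[of "\<lambda>y. oLimit r y \<and> lt x y", of L] L by blast
  have ex: "\<exists>L. oLimit r L \<and> lt x L \<and> (\<forall>L'. oLimit r L' \<and> lt x L' \<longrightarrow> le L L')" using m by blast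
  have N: "oLimit r (NL x) \<and> lt x (NL x) \<and> (\<forall>L'. oLimit r L' \<and> lt x L' \<longrightarrow> le (NL x) L')"
    unfolding NL_def by (rule someI_ex[OF ex])
  show "oLimit r (NL x)" "lt x (NL x)" using N by auto
  fix y assume y: "lt x y" "lt y (NL x)"
  show "\<not> oLimit r y"
  proof
    assume "oLimit r y"
    hence "le (NL x) y" using N y by blast
    thus False using y(2) not_le by blast
  qed
qed

definition ZZ where "ZZ = (SOME z. ozero r z)"

lemma ZZ: "ozero r ZZ" unfolding ZZ_def using ex_zero someI_ex by metis

lemma ZZ_le: "le ZZ a" using ZZ unfolding ozero_def by simp

lemma ZZ_lt_k: "lt ZZ k"
proof -
  obtain w where "w \<in> underS r k" using kinf by (metis finite.emptyI equals0I)
  hence "lt w k" unfolding underS_def olt_def by simp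
  thus ?thesis using le_lt_trans[OF ZZ_le] by blast
qed

lemma even_above:
  assumes a: "oLimit r a" and d: "lt d a"
  shows "\<exists>e. oEven r e \<and> \<not> ozero r e \<and> lt d e \<and> lt e a"
proof -
  obtain s1 where s1: "oSucc r d s1" using ex_succ by blast
  obtain s2 where s2: "oSucc r s1 s2" using ex_succ by blast
  have s1a: "lt s1 a" using limit_succ_lt[OF a d s1] .
  have s2a: "lt s2 a" using limit_succ_lt[OF a s1a s2] .
  have ds1: "lt d s1" using oSucc_lt[OF s1] .
  have ds2: "lt d s2" using lt_trans[OF ds1 oSucc_lt[OF s2]] .
  from even_or_odd[of d] show ?thesis
  proof
    assume "oEven r d"
    hence "oEven r s2" using oEven.step[OF _ s1 s2] by blast
    thus ?thesis using s2a ds2 lt_not_zero[OF ds2] by blast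
  next
    assume "\<exists>e. oEven r e \<and> oSucc r e d"
    then obtain e where e: "oEven r e" "oSucc r e d" by blast
    hence "oEven r s1" using oEven.step[OF _ e(2) s1] by blast
    thus ?thesis using s1a ds1 lt_not_zero[OF ds1] by blast
  qed
qed

lemma ex_sup:
  assumes "\<forall>s\<in>S. le s b"
  shows "\<exists>u. (\<forall>s\<in>S. le s u) \<and> (\<forall>v. (\<forall>s\<in>S. le s v) \<longrightarrow> le u v)"
  using ex_min[of "\<lambda>u. \<forall>s\<in>S. le s u", OF assms] by blast

end



context W2 begin

definition TT where "TT g1 = {x. le g1 x \<and> lt x (NL g1)}"

lemma T_lt: "x \<in> TT g1 \<Longrightarrow> lt x (NL g1)" unfolding TT_def by simp
lemma T_ge: "x \<in> TT g1 \<Longrightarrow> le g1 x" unfolding TT_def by simp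
lemma g1_in_T: "g1 \<in> TT g1" unfolding TT_def using NL_props(2) by simp

lemma lim_below_NL: "oLimit r a \<Longrightarrow> lt a (NL g1) \<Longrightarrow> le a g1"
  using NL_props(3)[of g1 a] not_lt by blast

lemma T_unb: "lt b (NL g1) \<Longrightarrow> \<exists>c\<in>TT g1. lt b c"
proof -
  assume b: "lt b (NL g1)"
  show ?thesis
  proof (cases "lt b g1")
    case True thus ?thesis using g1_in_T by blast
  next
    case False hence gb: "le g1 b" using not_lt by blast
    obtain s where s: "oSucc r b s" using ex_succ by blast
    have "lt s (NL g1)" using limit_succ_lt[OF NL_props(1) b s] .
    moreover have "le g1 s" using le_trans[OF gb lt_imp_le[OF oSucc_lt[OF s]]] .
    ultimately have "s \<in> TT g1" unfolding TT_def by simp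
    thus ?thesis using oSucc_lt[OF s] by blast
  qed
qed

lemma supEq_bound: "supEq r C b \<Longrightarrow> (\<And>c. c \<in> C \<Longrightarrow> le c g) \<Longrightarrow> lt g b \<Longrightarrow> False"
proof -
  assume a: "supEq r C b" "\<And>c. c \<in> C \<Longrightarrow> le c g" "lt g b"
  then obtain c where c: "c \<in> C" "lt g c" using a(1) unfolding supEq_def by blast
  thus False using a(2)[OF c(1)] not_le by blast
qed

lemma restrict_DT: "le a g1 \<Longrightarrow> (D \<union> TT g1) \<inter> {d. lt d a} = D \<inter> {d. lt d a}"
proof -
  assume a: "le a g1"
  have "x \<notin> TT g1" if "lt x a" for x
  proof
    assume "x \<in> TT g1" hence "le g1 x" by (rule T_ge)
    hence "le a x" using le_trans[OF a] by blast
    thus False using that not_le by blast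
  qed
  thus ?thesis by blast
qed

lemma supEq_DT: "supEq r (D \<union> TT g1) b \<Longrightarrow> lt b g1 \<Longrightarrow> supEq r D b"
proof -
  assume a: "supEq r (D \<union> TT g1) b" "lt b g1"
  hence "supEq r ((D \<union> TT g1) \<inter> {d. lt d g1}) b" using supEq_restrict[OF lt_imp_le[OF a(2)]] by blast
  hence "supEq r (D \<inter> {d. lt d g1}) b" using restrict_DT[OF le_refl] by simp
  thus ?thesis using supEq_restrict[OF lt_imp_le[OF a(2)]] by blast
qed

lemma club_DT:
  assumes D1: "\<And>c. c \<in> D \<Longrightarrow> le c g1"
    and D2: "\<And>b. lt b g1 \<Longrightarrow> \<not> ozero r b \<Longrightarrow> supEq r D b \<Longrightarrow> b \<in> D"
  shows "clubIn r (D \<union> TT g1) (NL g1)"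
proof (rule clubI)
  fix c assume "c \<in> D \<union> TT g1"
  thus "lt c (NL g1)" using D1 le_lt_trans[OF _ NL_props(2)] T_lt by blast
next
  fix b assume "lt b (NL g1)" thus "\<exists>c\<in>D \<union> TT g1. lt b c" using T_unb by blast
next
  fix b assume b: "lt b (NL g1)" "\<not> ozero r b" "supEq r (D \<union> TT g1) b"
  show "b \<in> D \<union> TT g1"
  proof (cases "lt b g1")
    case True thus ?thesis using D2[OF True b(2) supEq_DT[OF b(3) True]] by blast
  next
    case False thus ?thesis using b(1) not_lt unfolding TT_def by blast
  qed
qed


lemma supEq_empty: "supEq r {} b \<Longrightarrow> \<not> ozero r b \<Longrightarrow> False"
proof -
  assume a: "supEq r {} b" "\<not> ozero r b"
  have "ZZ \<noteq> b" using a(2) ZZ by auto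
  hence "lt ZZ b" using ZZ_le unfolding olt_def by simp
  thus False using a(1) unfolding supEq_def by blast
qed

lemma lim_le_lim: "oLimit r a \<Longrightarrow> le a b \<Longrightarrow> ozero r b \<or> oLimit r b \<Longrightarrow> oLimit r b"
proof -
  assume a: "oLimit r a" "le a b" "ozero r b \<or> oLimit r b"
  show "oLimit r b"
  proof (rule ccontr)
    assume "\<not> oLimit r b"
    hence "ozero r b" using a(3) by simp
    hence "le b a" unfolding ozero_def by simp
    hence "a = b" using le_antisym[OF a(2)] by simp
    thus False using a(1) \<open>ozero r b\<close> limit_not_zero by simp
  qed
qed

definition Jc where "Jc pc pb i \<longleftrightarrow> le (idx pb (gam pb)) i \<and> lt i k \<and>
   (\<not> oLimit r (gam pc) \<or> gam pc = gam pb \<or> gam pc \<in> derivedSet r (cl pb (gam pb) i))"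
definition jj where "jj pc pb = (SOME i. Jc pc pb i)"
definition TOPS where "TOPS pc pb i = (if lt i k then (if le (jj pc pb) i then cl pb (gam pb) i \<union> TT (gam pb)
    else cl pc (gam pc) i \<union> {x. x = gam pc \<and> oLimit r (gam pc)} \<union> TT (gam pb)) else {})"
definition SC :: "'a cond \<Rightarrow> 'a cond \<Rightarrow> 'a cond" where
  "SC pc pb = (NL (gam pb), (\<lambda>x. if x = NL (gam pb) then ZZ else idx pb x),
      (\<lambda>x i. if x = NL (gam pb) then TOPS pc pb i else cl pb x i))"

lemma SC_simps: "gam (SC pc pb) = NL (gam pb)"
  "idx (SC pc pb) x = (if x = NL (gam pb) then ZZ else idx pb x)"
  "cl (SC pc pb) x = (\<lambda>i. if x = NL (gam pb) then TOPS pc pb i else cl pb x i)"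
  unfolding SC_def gam_def idx_def cl_def by auto

lemma SC_props:
  assumes pc: "inP r k pc" and pb: "inP r k pb" and bc: "leP r k pb pc"
    and ic: "oLimit r (gam pc) \<Longrightarrow> idx pc (gam pc) = ZZ"
  shows "inP r k (SC pc pb)" "leP r k (SC pc pb) pb" "gam (SC pc pb) = NL (gam pb)"
    "idx (SC pc pb) (gam (SC pc pb)) = ZZ" "oLimit r (gam (SC pc pb))" "lt (gam pb) (gam (SC pc pb))"
    "oLimit r (gam pc) \<Longrightarrow> gam pc \<in> derivedSet r (cl (SC pc pb) (gam (SC pc pb)) ZZ)
        \<and> cl (SC pc pb) (gam (SC pc pb)) ZZ \<inter> {d. lt d (gam pc)} = cl pc (gam pc) ZZ"
proof -
  define q where "q = SC pc pb"
  define g where "g = gam pc"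
  define g1 where "g1 = gam pb"
  define G where "G = NL g1"
  define T where "T = TT g1"
  define j where "j = jj pc pb"
  have gb1: "le g1 (gam pb)" unfolding g1_def by simp
  have gcc: "le g (gam pc)" unfolding g_def by simp
  have gq: "gam q = G" unfolding q_def G_def g1_def SC_simps ..
  have iq: "\<And>x. idx q x = (if x = G then ZZ else idx pb x)" unfolding q_def G_def g1_def SC_simps ..
  have cq: "\<And>x i. cl q x i = (if x = G then TOPS pc pb i else cl pb x i)" unfolding q_def G_def g1_def SC_simps by simp
  have TOP: "\<And>i. TOPS pc pb i = (if lt i k then (if le j i then cl pb g1 i \<union> T
    else cl pc g i \<union> {x. x = g \<and> oLimit r g} \<union> T) else {})"
    unfolding TOPS_def j_def g_def g1_def T_def ..
  have GL: "oLimit r G" unfolding G_def by (rule NL_props(1))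
  have g1G: "lt g1 G" unfolding G_def by (rule NL_props(2))
  have gg1: "le g g1" using bc unfolding leP_def g_def g1_def by simp
  have limG: "\<And>a. oLimit r a \<Longrightarrow> lt a G \<Longrightarrow> le a g1" unfolding G_def using lim_below_NL by blast
  have g0: "ozero r g \<or> oLimit r g" unfolding g_def using P0[OF pc] .
  have g10: "ozero r g1 \<or> oLimit r g1" unfolding g1_def using P0[OF pb] .
  have agc: "\<And>x. le x g \<Longrightarrow> idx pb x = idx pc x \<and> cl pb x = cl pc x"
    using le_agree[OF pc pb bc] unfolding g_def by blast
  have icg: "oLimit r g \<Longrightarrow> idx pc g = ZZ" using ic unfolding g_def .
  have ig: "oLimit r g \<Longrightarrow> idx pb g = ZZ" using agc[OF le_refl] ic unfolding g_def by simp
  have g1lim: "oLimit r g1" if "oLimit r g" using lim_le_lim[OF that gg1 g10] .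
  have Jex: "oLimit r g1 \<Longrightarrow> Jc pc pb j"
  proof -
    assume L1: "oLimit r g1"
    have "\<exists>i. Jc pc pb i"
    proof (cases "oLimit r g \<and> g \<noteq> g1")
      case False
      have "lt (idx pb g1) k" using P1[OF pb L1] unfolding g1_def by simp
      thus ?thesis using False unfolding Jc_def g_def g1_def by (intro exI[of _ "idx pb (gam pb)"]) auto
    next
      case True
      hence "lt g g1" using gg1 unfolding olt_def by simp
      then obtain i where "le (idx pb g1) i" "lt i k" "g \<in> derivedSet r (cl pb g1 i)"
        using P6[OF pb _ L1 _ gb1] True by blast
      thus ?thesis unfolding Jc_def g_def g1_def by blast
    qed
    thus "Jc pc pb j" unfolding j_def jj_def by (rule someI_ex)
  qed
  have Jc1: "oLimit r g1 \<Longrightarrow> le (idx pb g1) j" "oLimit r g1 \<Longrightarrow> lt j k"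
    "oLimit r g1 \<Longrightarrow> \<not> oLimit r g \<or> g = g1 \<or> g \<in> derivedSet r (cl pb g1 j)"
    using Jex unfolding Jc_def g_def g1_def by auto
  have clb: "\<And>i c. c \<in> cl pb g1 i \<Longrightarrow> lt c g1"
  proof -
    fix i c assume c: "c \<in> cl pb g1 i"
    have L: "oLimit r g1"
    proof (rule ccontr)
      assume "\<not> oLimit r g1" hence "cl pb g1 i = {}" using P7'[OF pb, of g1 i] unfolding g1_def by simp
      thus False using c by simp
    qed
    have "le (idx pb g1) i \<and> lt i k" using c P4[OF pb L, of i] unfolding g1_def by auto
    thus "lt c g1" using club_sub[OF P2[OF pb L _ _ _] c] unfolding g1_def by auto
  qed
  have clc: "\<And>i c. c \<in> cl pc g i \<Longrightarrow> lt c g"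
  proof -
    fix i c assume c: "c \<in> cl pc g i"
    have L: "oLimit r g"
    proof (rule ccontr)
      assume "\<not> oLimit r g" hence "cl pc g i = {}" using P7'[OF pc, of g i] unfolding g_def by simp
      thus False using c by simp
    qed
    have "le (idx pc g) i \<and> lt i k" using c P4[OF pc L, of i] unfolding g_def by auto
    thus "lt c g" using club_sub[OF P2[OF pc L _ _ _] c] unfolding g_def by auto
  qed
  have clcnl: "\<And>i. \<not> oLimit r g \<Longrightarrow> cl pc g i = {}" using P7'[OF pc] by simp
  have clbnl: "\<And>i. \<not> oLimit r g1 \<Longrightarrow> cl pb g1 i = {}" using P7'[OF pb] by simp
  have clbclub: "clubIn r (cl pb g1 i) g1" if L: "oLimit r g1" and ji: "le j i" and ik: "lt i k" for i
  proof -
    have "le (idx pb g1) i" using le_trans[OF Jc1(1)[OF L] ji] .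
    thus ?thesis using P2[OF pb L gb1 _ ik] by simp
  qed
  have clcclub: "clubIn r (cl pc g i) g" if L: "oLimit r g" and ik: "lt i k" for i
  proof -
    have "le (idx pc g) i" using icg[OF L] ZZ_le by simp
    thus ?thesis using P2[OF pc L gcc _ ik] by simp
  qed
  have H4: "\<And>a i. oLimit r a \<Longrightarrow> lt a G \<Longrightarrow> le (idx q G) i \<Longrightarrow> lt i k \<Longrightarrow> a \<in> derivedSet r (cl q G i) \<Longrightarrow>
              le (idx q a) i \<and> cl q G i \<inter> {d. lt d a} = cl q a i"
  proof -
    fix a i assume a: "oLimit r a" "lt a G" "le (idx q G) i" "lt i k" "a \<in> derivedSet r (cl q G i)"
    have ag1: "le a g1" using limG a by blast
    have aG: "a \<noteq> G" using a(2) by auto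
    have iqa: "idx q a = idx pb a" "cl q a = cl pb a" using iq cq aG by auto
    have L1: "oLimit r g1" using lim_le_lim[OF a(1) ag1 g10] .
    show "le (idx q a) i \<and> cl q G i \<inter> {d. lt d a} = cl q a i"
    proof (cases "le j i")
      case True
      define C where "C = cl pb g1 i"
      have CG: "cl q G i = C \<union> T" unfolding C_def using cq TOP True a(4) by simp
      have Cr: "(C \<union> T) \<inter> {d. lt d g1} = C" unfolding T_def using restrict_DT[OF le_refl, of C] clb C_def by blast
      show ?thesis
      proof (cases "a = g1")
        case True
        have "le (idx pb g1) i" using le_trans[OF Jc1(1)[OF L1] \<open>le j i\<close>] .
        thus ?thesis using iqa CG Cr True C_def by simp
      next
        case False
        hence ag: "lt a g1" using ag1 unfolding olt_def by simp
        have "a \<in> derivedSet r C" using derived_restrict[OF ag Cr[symmetric]] a(5) CG by simp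
        hence P: "le (idx pb a) i \<and> C \<inter> {d. lt d a} = cl pb a i"
          using P5[OF pb a(1) L1 ag _ _ a(4)] le_trans[OF Jc1(1)[OF L1] \<open>le j i\<close>] unfolding C_def g1_def by simp
        have "(C \<union> T) \<inter> {d. lt d a} = C \<inter> {d. lt d a}" unfolding T_def using restrict_DT[OF ag1] by blast
        thus ?thesis using P iqa CG by simp
      qed
    next
      case False
      define D where "D = cl pc g i \<union> {x. x = g \<and> oLimit r g}"
      have CG: "cl q G i = D \<union> T" unfolding D_def using cq TOP False a(4) by simp
      have Dg: "le c g" if "c \<in> D" for c
      proof (cases "c \<in> cl pc g i")
        case True show ?thesis using lt_imp_le[OF clc[OF True]] .
      next
        case False thus ?thesis using that unfolding D_def by simp
      qed
      have ag: "le a g"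
      proof (rule ccontr)
        assume "\<not> le a g" hence ga: "lt g a" using not_le by blast
        have "supEq r (D \<union> T) a" using a(5) CG unfolding derivedSet_def by simp
        hence "supEq r ((D \<union> T) \<inter> {d. lt d g1}) a" using supEq_restrict[OF ag1] by blast
        hence "supEq r D a" using supEq_restrict[OF ag1, of D] restrict_DT[OF le_refl, of D g1] unfolding T_def by simp
        thus False using supEq_bound[OF _ Dg ga] by blast
      qed
      have gL: "oLimit r g" using lim_le_lim[OF a(1) ag g0] .
      have Dr: "(D \<union> T) \<inter> {d. lt d g} = cl pc g i"
      proof -
        have "(D \<union> T) \<inter> {d. lt d g} = D \<inter> {d. lt d g}" unfolding T_def using restrict_DT[OF gg1] by blast
        also have "\<dots> = cl pc g i" unfolding D_def using clc by auto
        finally show ?thesis .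
      qed
      have idg: "idx pb g = ZZ" using ig gL .
      show ?thesis
      proof (cases "a = g")
        case True
        thus ?thesis using iqa CG Dr idg ZZ_le agc[OF le_refl] by simp
      next
        case False
        hence ag': "lt a g" using ag unfolding olt_def by simp
        have "a \<in> derivedSet r (cl pc g i)" using derived_restrict[OF ag' Dr[symmetric]] a(5) CG by simp
        hence P: "le (idx pc a) i \<and> cl pc g i \<inter> {d. lt d a} = cl pc a i"
          using P5[OF pc a(1) gL ag' _ _ a(4)] icg[OF gL] ZZ_le unfolding g_def by simp
        have "(D \<union> T) \<inter> {d. lt d a} = cl pc g i \<inter> {d. lt d a}"
          using Dr ag' lt_trans by blast
        thus ?thesis using P iqa CG agc[OF ag] by simp
      qed
    qed
  qed
  have TG: "T = TT g1" and GG: "G = NL g1" unfolding T_def G_def by simp_all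
  have Dlarge: "clubIn r (cl pb g1 i \<union> T) G" if ji: "le j i" and ik: "lt i k" for i
    unfolding TG GG
  proof (rule club_DT)
    fix c assume "c \<in> cl pb g1 i" thus "le c g1" using clb lt_imp_le by blast
  next
    fix b assume b: "lt b g1" "\<not> ozero r b" "supEq r (cl pb g1 i) b"
    show "b \<in> cl pb g1 i"
    proof (cases "oLimit r g1")
      case True show ?thesis using club_closed[OF clbclub[OF True ji ik] b(1) b(2) b(3)] .
    next
      case False thus ?thesis using supEq_empty b(2,3) clbnl by metis
    qed
  qed
  have Dsmall: "clubIn r (cl pc g i \<union> {x. x = g \<and> oLimit r g} \<union> T) G" if ik: "lt i k" for i
    unfolding TG GG
  proof (rule club_DT)
    fix c assume c: "c \<in> cl pc g i \<union> {x. x = g \<and> oLimit r g}"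
    have "le c g"
    proof (cases "c \<in> cl pc g i")
      case True show ?thesis using lt_imp_le[OF clc[OF True]] .
    next
      case False thus ?thesis using c by simp
    qed
    thus "le c g1" using le_trans[OF _ gg1] by blast
  next
    fix b assume b: "lt b g1" "\<not> ozero r b" "supEq r (cl pc g i \<union> {x. x = g \<and> oLimit r g}) b"
    show "b \<in> cl pc g i \<union> {x. x = g \<and> oLimit r g}"
    proof (cases "oLimit r g")
      case False
      hence "cl pc g i \<union> {x. x = g \<and> oLimit r g} = {}" using clcnl by simp
      thus ?thesis using supEq_empty b(2,3) by metis
    next
      case gL: True
      have Dg: "le c g" if "c \<in> cl pc g i \<union> {x. x = g \<and> oLimit r g}" for c
      proof (cases "c \<in> cl pc g i")
        case True show ?thesis using lt_imp_le[OF clc[OF True]] .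
      next
        case False thus ?thesis using that by simp
      qed
      consider "lt g b" | "b = g" | "lt b g" using lt_linear by blast
      thus ?thesis
      proof cases
        case 1 thus ?thesis using supEq_bound[OF b(3) Dg] by blast
      next
        case 2 thus ?thesis using gL by simp
      next
        case 3
        have "(cl pc g i \<union> {x. x = g \<and> oLimit r g}) \<inter> {d. lt d g} = cl pc g i" using clc by auto
        hence "supEq r (cl pc g i) b" using supEq_restrict[OF lt_imp_le[OF 3], of "cl pc g i \<union> {x. x = g \<and> oLimit r g}"] b(3) by simp
        thus ?thesis using club_closed[OF clcclub[OF gL ik] 3 b(2)] by blast
      qed
    qed
  qed
  have TOPk: "\<And>i. lt i k \<Longrightarrow> cl q G i = (if le j i then cl pb g1 i \<union> T else cl pc g i \<union> {x. x = g \<and> oLimit r g} \<union> T)"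
    using cq TOP by simp
  have iqG: "idx q G = ZZ" using iq by simp
  have H5: "\<exists>i. le (idx q G) i \<and> lt i k \<and> a \<in> derivedSet r (cl q G i)" if a: "oLimit r a" "lt a G" for a
  proof -
    have ag1: "le a g1" using limG[OF a] .
    have L1: "oLimit r g1" using lim_le_lim[OF a(1) ag1 g10] .
    have ij: "le (idx pb g1) j" using Jc1(1)[OF L1] .
    have jk: "lt j k" using Jc1(2)[OF L1] .
    have g1T: "g1 \<in> T" using g1_in_T unfolding T_def .
    have Cj: "cl q G j = cl pb g1 j \<union> T" using TOPk[OF jk] by simp
    show ?thesis
    proof (cases "a = g1")
      case True
      have "g1 \<in> derivedSet r (cl pb g1 j \<union> T)"
        using limit_in_derived[OF clbclub[OF L1 le_refl jk] L1, of "cl pb g1 j \<union> T"] g1T by simp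
      hence "a \<in> derivedSet r (cl q G j)" using Cj True by simp
      thus ?thesis using iqG ZZ_le[of j] jk by (intro exI[of _ j]) simp
    next
      case False
      hence ag: "lt a g1" using ag1 unfolding olt_def by simp
      obtain i0 where i0: "le (idx pb g1) i0" "lt i0 k" "a \<in> derivedSet r (cl pb g1 i0)"
        using P6[OF pb a(1) L1 ag gb1] by blast
      show ?thesis
      proof (cases "le j i0")
        case True
        have "a \<in> derivedSet r (cl pb g1 i0 \<union> T)" using derived_mono[OF i0(3), of "cl pb g1 i0 \<union> T"] by simp
        moreover have "cl q G i0 = cl pb g1 i0 \<union> T" using TOPk[OF i0(2)] True by simp
        ultimately show ?thesis using iqG ZZ_le[of i0] i0(2) by (intro exI[of _ i0]) simp
      next
        case False
        hence "le i0 j" using not_le[of j i0] lt_imp_le by simp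
        hence "cl pb g1 i0 \<subseteq> cl pb g1 j" using P3'[OF pb L1 gb1 i0(1) _ jk] by blast
        hence "a \<in> derivedSet r (cl pb g1 j \<union> T)" using derived_mono[OF i0(3), of "cl pb g1 j \<union> T"] by blast
        thus ?thesis using Cj iqG ZZ_le[of j] jk by (intro exI[of _ j]) simp
      qed
    qed
  qed
  have H3c: "cl q G i \<subseteq> cl q G i'" if ii: "lt i i'" and ik': "lt i' k" for i i'
  proof -
    have ik: "lt i k" using lt_trans[OF ii ik'] .
    show ?thesis
    proof (cases "le j i")
      case True
      hence ji': "le j i'" using le_trans[OF _ lt_imp_le[OF ii]] by blast
      have "cl pb g1 i \<subseteq> cl pb g1 i'"
      proof (cases "oLimit r g1")
        case True thus ?thesis using P3'[OF pb True gb1 _ lt_imp_le[OF ii] ik'] le_trans[OF Jc1(1)[OF True] \<open>le j i\<close>] by blast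
      next
        case False thus ?thesis using clbnl by simp
      qed
      thus ?thesis using TOPk[OF ik] TOPk[OF ik'] True ji' by auto
    next
      case nji: False
      show ?thesis
      proof (cases "le j i'")
        case False
        have "cl pc g i \<subseteq> cl pc g i'"
        proof (cases "oLimit r g")
          case True thus ?thesis using P3'[OF pc True gcc _ lt_imp_le[OF ii] ik'] icg[OF True] ZZ_le by simp
        next
          case False thus ?thesis using clcnl by simp
        qed
        thus ?thesis using TOPk[OF ik] TOPk[OF ik'] nji False by auto
      next
        case ji': True
        have sub: "cl pc g i \<union> {x. x = g \<and> oLimit r g} \<subseteq> cl pb g1 i' \<union> T"
        proof (cases "oLimit r g")
          case False thus ?thesis using clcnl by simp
        next
          case gL: True
          have L1: "oLimit r g1" using g1lim[OF gL] .
          have ij: "le (idx pb g1) j" and jk: "lt j k" using Jc1[OF L1] by auto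
          have ij': "le i j" using nji not_le[of j i] lt_imp_le by simp
          have P3j: "cl pb g1 j \<subseteq> cl pb g1 i'" using P3'[OF pb L1 gb1 ij ji' ik'] .
          have gpb: "le g (gam pb)" using le_trans[OF gg1 gb1] .
          have cgi: "cl pc g i = cl pb g i" using agc[OF le_refl] by simp
          have "g = g1 \<or> g \<in> derivedSet r (cl pb g1 j)" using Jc1(3)[OF L1] gL by blast
          thus ?thesis
          proof
            assume gg: "g = g1"
            have "cl pb g1 i \<subseteq> cl pb g1 i'" using P3'[OF pb L1 gb1 _ lt_imp_le[OF ii] ik'] ig[OF gL] gg ZZ_le by simp
            moreover have "g \<in> T" using gg g1_in_T unfolding T_def by simp
            ultimately show ?thesis using cgi gg by auto
          next
            assume gd: "g \<in> derivedSet r (cl pb g1 j)"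
            hence "g \<in> cl pb g1 j" unfolding derivedSet_def by simp
            hence gl: "lt g g1" using clb by blast
            have P5': "cl pb g1 j \<inter> {d. lt d g} = cl pb g j" using P5[OF pb gL L1 gl gb1 ij jk gd] by simp
            have "cl pb g i \<subseteq> cl pb g j" using P3'[OF pb gL gpb _ ij' jk] ig[OF gL] ZZ_le by simp
            hence "cl pc g i \<subseteq> cl pb g1 j" using cgi P5' by blast
            moreover have "g \<in> cl pb g1 j" using gd unfolding derivedSet_def by simp
            ultimately show ?thesis using P3j by auto
          qed
        qed
        thus ?thesis using TOPk[OF ik] TOPk[OF ik'] nji ji' by auto
      qed
    qed
  qed
  have inq: "inP r k q"
  proof (rule top_ext[OF GL gq])
    fix b assume b: "oLimit r b" "lt b G"
    have bg1: "le b g1" using limG b by blast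
    have "\<forall>y. le y b \<longrightarrow> idx q y = idx pb y \<and> cl q y = cl pb y"
    proof (intro allI impI)
      fix y assume "le y b"
      hence "lt y G" using le_lt_trans[OF _ b(2)] by blast
      hence "y \<noteq> G" by auto
      thus "idx q y = idx pb y \<and> cl q y = cl pb y" using iq cq by auto
    qed
    thus "\<exists>p. inP r k p \<and> le b (gam p) \<and> (\<forall>y. le y b \<longrightarrow> idx q y = idx p y \<and> cl q y = cl p y)"
      using pb le_trans[OF bg1 gb1] by blast
  next
    fix x assume x: "\<not> (oLimit r x \<and> le x G)"
    hence xG: "x \<noteq> G" using GL by auto
    have "\<not> (oLimit r x \<and> le x (gam pb))"
    proof
      assume "oLimit r x \<and> le x (gam pb)"
      hence "le x G" using le_trans[OF _ lt_imp_le[OF g1G]] unfolding g1_def by blast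
      thus False using x \<open>oLimit r x \<and> le x (gam pb)\<close> by simp
    qed
    thus "idx q x = undefined \<and> (\<forall>i. cl q x i = {})" using iq cq xG P7[OF pb] P7'[OF pb] by simp
  next
    show "lt (idx q G) k" using iqG ZZ_lt_k by simp
  next
    fix i assume "le (idx q G) i" "lt i k"
    thus "clubIn r (cl q G i) G" using TOPk Dlarge Dsmall by (cases "le j i") auto
  next
    fix i i' assume "le (idx q G) i" "lt i i'" "lt i' k"
    thus "cl q G i \<subseteq> cl q G i'" using H3c by blast
  next
    fix i assume "\<not> (le (idx q G) i \<and> lt i k)"
    hence "\<not> lt i k" using iqG ZZ_le by simp
    thus "cl q G i = {}" using cq TOP by simp
  next
    fix a i assume "oLimit r a" "lt a G" "le (idx q G) i" "lt i k" "a \<in> derivedSet r (cl q G i)"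
    thus "le (idx q a) i \<and> cl q G i \<inter> {d. lt d a} = cl q a i" using H4 by blast
  next
    fix a assume "oLimit r a" "lt a G"
    thus "\<exists>i. le (idx q G) i \<and> lt i k \<and> a \<in> derivedSet r (cl q G i)" using H5 by blast
  qed
  show "inP r k (SC pc pb)" using inq unfolding q_def .
  have "leP r k q pb"
  proof (rule agree_le)
    show "le (gam pb) (gam q)" using g1G gq unfolding g1_def olt_def by simp
    fix x assume "le x (gam pb)"
    hence "lt x G" using le_lt_trans[OF _ g1G] unfolding g1_def by blast
    thus "idx q x = idx pb x \<and> cl q x = cl pb x" using iq cq by auto
  qed
  thus "leP r k (SC pc pb) pb" unfolding q_def .
  have track: "g \<in> derivedSet r (cl q G ZZ) \<and> cl q G ZZ \<inter> {d. lt d g} = cl pc g ZZ" if gL: "oLimit r g"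
  proof -
    have L1: "oLimit r g1" using g1lim[OF gL] .
    have ij: "le (idx pb g1) j" and jk: "lt j k" using Jc1[OF L1] by auto
    have zk: "lt ZZ k" by (rule ZZ_lt_k)
    have gG: "lt g G" using le_lt_trans[OF gg1 g1G] .
    have mem: "g \<in> derivedSet r (cl q G ZZ)"
    proof (cases "le j ZZ")
      case True
      hence CG: "cl q G ZZ = cl pb g1 ZZ \<union> T" using TOPk[OF zk] by simp
      have "g = g1 \<or> g \<in> derivedSet r (cl pb g1 j)" using Jc1(3)[OF L1] gL by blast
      thus ?thesis
      proof
        assume "g = g1"
        thus ?thesis using limit_in_derived[OF clbclub[OF L1 True zk] L1] g1_in_T CG unfolding T_def by auto
      next
        assume "g \<in> derivedSet r (cl pb g1 j)"
        moreover have "cl pb g1 j \<subseteq> cl pb g1 ZZ" using P3'[OF pb L1 gb1 ij True zk] .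
        ultimately show ?thesis using CG derived_mono by blast
      qed
    next
      case False
      hence CG: "cl q G ZZ = cl pc g ZZ \<union> {x. x = g \<and> oLimit r g} \<union> T" using TOPk[OF zk] by simp
      show ?thesis using limit_in_derived[OF clcclub[OF gL zk] gL] CG gL by auto
    qed
    have "le (idx q g) ZZ \<and> cl q G ZZ \<inter> {d. lt d g} = cl q g ZZ"
      using H4[OF gL gG _ zk mem] iqG by simp
    moreover have "cl q g = cl pc g"
    proof -
      have "g \<noteq> G" using gG by auto
      hence "cl q g = cl pb g" using cq by (intro ext) simp
      thus ?thesis using agc[OF le_refl] by simp
    qed
    ultimately show ?thesis using mem by simp
  qed
  show "oLimit r (gam pc) \<Longrightarrow> gam pc \<in> derivedSet r (cl (SC pc pb) (gam (SC pc pb)) ZZ)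
        \<and> cl (SC pc pb) (gam (SC pc pb)) ZZ \<inter> {d. lt d (gam pc)} = cl pc (gam pc) ZZ"
    using track gq unfolding q_def g_def by simp
  show "gam (SC pc pb) = NL (gam pb)" by (rule SC_simps)
  show "idx (SC pc pb) (gam (SC pc pb)) = ZZ" using iq gq unfolding q_def by simp
  show "oLimit r (gam (SC pc pb))" using GL gq unfolding q_def by simp
  show "lt (gam pb) (gam (SC pc pb))" using g1G gq unfolding q_def g1_def by simp
qed

end




context W2 begin

definition Ev where "Ev a = {e. oEven r e \<and> \<not> ozero r e \<and> lt e a}"
definition LG where "LG H a = (SOME u. (\<forall>d. lt d a \<longrightarrow> le (gam (H d)) u) \<and> (\<forall>v. (\<forall>d. lt d a \<longrightarrow> le (gam (H d)) v) \<longrightarrow> le u v))"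
definition pick where "pick H a x = (SOME d. lt d a \<and> lt x (gam (H d)))"
definition UU where "UU H a i = (\<Union>e\<in>Ev a. cl (H e) (gam (H e)) i)"
definition LC :: "('a \<Rightarrow> 'a cond) \<Rightarrow> 'a \<Rightarrow> 'a cond" where
  "LC H a = (LG H a, (\<lambda>x. if x = LG H a then ZZ else if lt x (LG H a) then idx (H (pick H a x)) x else undefined),
     (\<lambda>x i. if x = LG H a then (if lt i k then UU H a i else {}) else if lt x (LG H a) then cl (H (pick H a x)) x i else {}))"

lemma LC_simps: "gam (LC H a) = LG H a"
  "idx (LC H a) x = (if x = LG H a then ZZ else if lt x (LG H a) then idx (H (pick H a x)) x else undefined)"
  "cl (LC H a) x i = (if x = LG H a then (if lt i k then UU H a i else {}) else if lt x (LG H a) then cl (H (pick H a x)) x i else {})"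
  unfolding LC_def gam_def idx_def cl_def by auto

lemma LG_bounded: "\<exists>b. \<forall>d. lt d a \<longrightarrow> le (gam (H d)) b"
proof -
  have "|gam ` H ` underS r a| \<le>o |underS r a|"
    using ordLeq_transitive[OF card_of_image card_of_image] .
  hence "|gam ` H ` underS r a| <o r" using ordLeq_ordLess_trans[OF _ underS_small] by blast
  from small_bounded[OF this] obtain b where b: "\<forall>s\<in>gam ` H ` underS r a. le s b" by (elim exE)
  have "le (gam (H d)) b" if "lt d a" for d
  proof -
    have "d \<in> underS r a" using that unfolding underS_def olt_def by simp
    thus ?thesis using b by simp
  qed
  thus ?thesis by blast
qed

lemma LG_props: "\<And>d. lt d a \<Longrightarrow> le (gam (H d)) (LG H a)"
  "\<And>v. (\<And>d. lt d a \<Longrightarrow> le (gam (H d)) v) \<Longrightarrow> le (LG H a) v"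
proof -
  obtain b where b: "\<forall>d. lt d a \<longrightarrow> le (gam (H d)) b" using LG_bounded by blast
  obtain m where m: "\<forall>d. lt d a \<longrightarrow> le (gam (H d)) m" "\<And>y. \<forall>d. lt d a \<longrightarrow> le (gam (H d)) y \<Longrightarrow> le m y"
    using ex_min[of "\<lambda>u. \<forall>d. lt d a \<longrightarrow> le (gam (H d)) u", OF b] by blast
  have ex: "\<exists>u. (\<forall>d. lt d a \<longrightarrow> le (gam (H d)) u) \<and> (\<forall>v. (\<forall>d. lt d a \<longrightarrow> le (gam (H d)) v) \<longrightarrow> le u v)"
    using m by blast
  have L: "(\<forall>d. lt d a \<longrightarrow> le (gam (H d)) (LG H a)) \<and> (\<forall>v. (\<forall>d. lt d a \<longrightarrow> le (gam (H d)) v) \<longrightarrow> le (LG H a) v)"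
    unfolding LG_def by (rule someI_ex[OF ex])
  show "\<And>d. lt d a \<Longrightarrow> le (gam (H d)) (LG H a)" using L by blast
  show "\<And>v. (\<And>d. lt d a \<Longrightarrow> le (gam (H d)) v) \<Longrightarrow> le (LG H a) v" using L by blast
qed


lemma LC_props:
  assumes aL: "oLimit r a"
    and Hp: "\<And>d. lt d a \<Longrightarrow> inP r k (H d)"
    and Hdec: "\<And>d d'. lt d d' \<Longrightarrow> lt d' a \<Longrightarrow> leP r k (H d') (H d)"
    and HevL: "\<And>e. e \<in> Ev a \<Longrightarrow> oLimit r (gam (H e))"
    and HevI: "\<And>e. e \<in> Ev a \<Longrightarrow> idx (H e) (gam (H e)) = ZZ"
    and HevS: "\<And>e d. e \<in> Ev a \<Longrightarrow> lt d e \<Longrightarrow> lt (gam (H d)) (gam (H e))"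
    and HevT: "\<And>e e'. e \<in> Ev a \<Longrightarrow> e' \<in> Ev a \<Longrightarrow> lt e' e \<Longrightarrow> gam (H e') \<in> derivedSet r (cl (H e) (gam (H e)) ZZ)"
  shows "inP r k (LC H a)" "\<And>d. lt d a \<Longrightarrow> leP r k (LC H a) (H d)"
    "idx (LC H a) (gam (LC H a)) = ZZ" "oLimit r (gam (LC H a))"
    "\<And>d. lt d a \<Longrightarrow> lt (gam (H d)) (gam (LC H a))"
    "\<And>e. e \<in> Ev a \<Longrightarrow> gam (H e) \<in> derivedSet r (cl (LC H a) (gam (LC H a)) ZZ)"
proof -
  define q where "q = LC H a"
  define \<gamma> where "\<gamma> = LG H a"
  define C where "C e i = cl (H e) (gam (H e)) i" for e i
  define U where "U i = UU H a i" for i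
  have gq: "gam q = \<gamma>" unfolding q_def \<gamma>_def LC_simps ..
  have iq: "\<And>x. idx q x = (if x = \<gamma> then ZZ else if lt x \<gamma> then idx (H (pick H a x)) x else undefined)"
    unfolding q_def \<gamma>_def LC_simps ..
  have cq: "\<And>x i. cl q x i = (if x = \<gamma> then (if lt i k then U i else {}) else if lt x \<gamma> then cl (H (pick H a x)) x i else {})"
    unfolding q_def \<gamma>_def U_def LC_simps ..
  have U_def': "\<And>i. U i = (\<Union>e\<in>Ev a. C e i)" unfolding U_def UU_def C_def ..
  have ub: "\<And>d. lt d a \<Longrightarrow> le (gam (H d)) \<gamma>" unfolding \<gamma>_def by (rule LG_props(1))
  have least: "\<And>v. (\<And>d. lt d a \<Longrightarrow> le (gam (H d)) v) \<Longrightarrow> le \<gamma> v" unfolding \<gamma>_def by (rule LG_props(2))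
  have EvI: "\<And>e. oEven r e \<Longrightarrow> \<not> ozero r e \<Longrightarrow> lt e a \<Longrightarrow> e \<in> Ev a" unfolding Ev_def by simp
  have Eva: "\<And>e. e \<in> Ev a \<Longrightarrow> lt e a" unfolding Ev_def by simp
  have evab: "\<exists>e. e \<in> Ev a \<and> lt d e" if "lt d a" for d
    using even_above[OF aL that] EvI by blast
  have strict: "lt (gam (H d)) \<gamma>" if d: "lt d a" for d
  proof -
    obtain e where e: "e \<in> Ev a" "lt d e" using evab[OF d] by blast
    show ?thesis using lt_le_trans[OF HevS[OF e] ub[OF Eva[OF e(1)]]] .
  qed
  have cof: "\<exists>d. lt d a \<and> lt x (gam (H d))" if x: "lt x \<gamma>" for x
  proof (rule ccontr)
    assume "\<not> (\<exists>d. lt d a \<and> lt x (gam (H d)))"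
    hence "\<And>d. lt d a \<Longrightarrow> le (gam (H d)) x" using not_lt by blast
    hence "le \<gamma> x" using least by blast
    thus False using x not_le by blast
  qed
  have cofE: "\<exists>e. e \<in> Ev a \<and> lt x (gam (H e))" if x: "lt x \<gamma>" for x
  proof -
    obtain d where d: "lt d a" "lt x (gam (H d))" using cof[OF x] by blast
    obtain e where e: "e \<in> Ev a" "lt d e" using evab[OF d(1)] by blast
    show ?thesis using e lt_trans[OF d(2) HevS[OF e]] by blast
  qed
  have za: "lt ZZ a" using ZZ limit_not_zero[OF aL] ZZ_le unfolding olt_def by auto
  have gL: "oLimit r \<gamma>" unfolding oLimit_def
  proof (intro conjI allI impI)
    show "\<not> ozero r \<gamma>" using lt_not_zero[OF strict[OF za]] .
    fix b assume "lt b \<gamma>"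
    then obtain d where "lt d a" "lt b (gam (H d))" using cof by blast
    thus "\<exists>c. lt b c \<and> lt c \<gamma>" using strict by blast
  qed
  have agr2: "idx (H d) x = idx (H d') x \<and> cl (H d) x = cl (H d') x"
    if d: "lt d a" "lt d' a" and x: "le x (gam (H d))" "le x (gam (H d'))" for d d' x
  proof -
    consider "lt d d'" | "d = d'" | "lt d' d" using lt_linear by blast
    thus ?thesis
    proof cases
      case 1
      have "leP r k (H d') (H d)" using Hdec[OF 1 d(2)] .
      thus ?thesis using le_agree[OF Hp[OF d(1)] Hp[OF d(2)] _ x(1)] by simp
    next
      case 2 thus ?thesis by simp
    next
      case 3
      have "leP r k (H d) (H d')" using Hdec[OF 3 d(1)] .
      thus ?thesis using le_agree[OF Hp[OF d(2)] Hp[OF d(1)] _ x(2)] by simp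
    qed
  qed
  have agr: "idx q x = idx (H d) x \<and> cl q x = cl (H d) x" if d: "lt d a" and x: "le x (gam (H d))" for d x
  proof -
    have xg: "lt x \<gamma>" using le_lt_trans[OF x strict[OF d]] .
    hence xne: "x \<noteq> \<gamma>" by auto
    have ex: "\<exists>d. lt d a \<and> lt x (gam (H d))" using cof[OF xg] .
    define d' where "d' = pick H a x"
    have d': "lt d' a \<and> lt x (gam (H d'))" unfolding d'_def pick_def by (rule someI_ex[OF ex])
    have "idx q x = idx (H d') x" "cl q x = cl (H d') x"
      using iq[of x] cq[of x] xne xg unfolding d'_def by auto
    thus ?thesis using agr2[OF d'[THEN conjunct1] d lt_imp_le[OF d'[THEN conjunct2]] x] by simp
  qed
  have Clim: "\<And>e. e \<in> Ev a \<Longrightarrow> oLimit r (gam (H e))" by (rule HevL)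
  have Cclub: "clubIn r (C e i) (gam (H e))" if e: "e \<in> Ev a" and ik: "lt i k" for e i
  proof -
    have "le (idx (H e) (gam (H e))) i" using HevI[OF e] ZZ_le by simp
    thus ?thesis unfolding C_def using P2[OF Hp[OF Eva[OF e]] Clim[OF e] le_refl _ ik] by simp
  qed
  have Cmono: "C e i \<subseteq> C e i'" if e: "e \<in> Ev a" and ii: "le i i'" and ik: "lt i' k" for e i i'
  proof -
    have "le (idx (H e) (gam (H e))) i" using HevI[OF e] ZZ_le by simp
    thus ?thesis unfolding C_def using P3'[OF Hp[OF Eva[OF e]] Clim[OF e] le_refl _ ii ik] by simp
  qed
  have Csub: "lt c (gam (H e))" if e: "e \<in> Ev a" and c: "c \<in> C e i" for e i c
  proof (cases "lt i k")
    case True show ?thesis using club_sub[OF Cclub[OF e True] c] .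
  next
    case False
    have "C e i = {}" unfolding C_def using P4[OF Hp[OF Eva[OF e]] Clim[OF e] le_refl] False by simp
    thus ?thesis using c by simp
  qed
  have coh: "C e i \<inter> {d. lt d (gam (H e'))} = C e' i"
    if e: "e \<in> Ev a" "e' \<in> Ev a" "lt e' e" and ik: "lt i k" for e e' i
  proof -
    have zi: "le ZZ i" by (rule ZZ_le)
    have dz: "gam (H e') \<in> derivedSet r (C e ZZ)" unfolding C_def using HevT[OF e] .
    have "gam (H e') \<in> derivedSet r (C e i)" using derived_mono[OF dz Cmono[OF e(1) zi ik]] .
    moreover have lt': "lt (gam (H e')) (gam (H e))" using HevS[OF e(1) e(3)] .
    ultimately have "le (idx (H e) (gam (H e'))) i \<and> C e i \<inter> {d. lt d (gam (H e'))} = cl (H e) (gam (H e')) i"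
      using P5[OF Hp[OF Eva[OF e(1)]] Clim[OF e(2)] Clim[OF e(1)] lt' le_refl _ ik] HevI[OF e(1)] zi
      unfolding C_def by simp
    moreover have "cl (H e) (gam (H e')) = cl (H e') (gam (H e'))"
      using agr2[OF Eva[OF e(1)] Eva[OF e(2)] lt_imp_le[OF lt'] le_refl] by simp
    ultimately show ?thesis unfolding C_def by simp
  qed
  have Ur: "U i \<inter> {d. lt d (gam (H e))} = C e i" if e: "e \<in> Ev a" and ik: "lt i k" for e i
  proof
    show "C e i \<subseteq> U i \<inter> {d. lt d (gam (H e))}" using U_def' e Csub[OF e] by blast
  next
    show "U i \<inter> {d. lt d (gam (H e))} \<subseteq> C e i"
    proof
      fix c assume c: "c \<in> U i \<inter> {d. lt d (gam (H e))}"
      then obtain e' where e': "e' \<in> Ev a" "c \<in> C e' i" using U_def' by blast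
      have cl: "lt c (gam (H e))" using c by simp
      consider "lt e' e" | "e' = e" | "lt e e'" using lt_linear by blast
      thus "c \<in> C e i"
      proof cases
        case 1 thus ?thesis using coh[OF e e' (1) 1 ik] e'(2) by blast
      next
        case 2 thus ?thesis using e'(2) by simp
      next
        case 3 thus ?thesis using coh[OF e'(1) e 3 ik] e'(2) cl by blast
      qed
    qed
  qed
  have gU: "gam (H e) \<in> derivedSet r (U i)" if e: "e \<in> Ev a" and ik: "lt i k" for e i
  proof -
    obtain e2 where e2: "e2 \<in> Ev a" "lt e e2" using evab[OF Eva[OF e]] by blast
    have "gam (H e) \<in> derivedSet r (C e2 ZZ)" unfolding C_def using HevT[OF e2(1) e e2(2)] .
    hence "gam (H e) \<in> C e2 i" using Cmono[OF e2(1) ZZ_le ik] unfolding derivedSet_def by blast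
    hence mem: "gam (H e) \<in> U i" using U_def' e2(1) by blast
    have "C e i \<subseteq> U i" using U_def' e by blast
    thus ?thesis using limit_in_derived[OF Cclub[OF e ik] Clim[OF e] mem] by simp
  qed
  have iqG: "idx q \<gamma> = ZZ" using iq by simp
  have cqG: "\<And>i. lt i k \<Longrightarrow> cl q \<gamma> i = U i" using cq by simp
  have inq: "inP r k q"
  proof (rule top_ext[OF gL gq])
    fix b assume b: "oLimit r b" "lt b \<gamma>"
    obtain e where e: "e \<in> Ev a" "lt b (gam (H e))" using cofE[OF b(2)] by blast
    have "\<forall>y. le y b \<longrightarrow> idx q y = idx (H e) y \<and> cl q y = cl (H e) y"
      using agr[OF Eva[OF e(1)]] le_trans[OF _ lt_imp_le[OF e(2)]] by blast
    thus "\<exists>p. inP r k p \<and> le b (gam p) \<and> (\<forall>y. le y b \<longrightarrow> idx q y = idx p y \<and> cl q y = cl p y)"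
      using Hp[OF Eva[OF e(1)]] lt_imp_le[OF e(2)] by blast
  next
    fix x assume x: "\<not> (oLimit r x \<and> le x \<gamma>)"
    hence xne: "x \<noteq> \<gamma>" using gL by auto
    show "idx q x = undefined \<and> (\<forall>i. cl q x i = {})"
    proof (cases "lt x \<gamma>")
      case False thus ?thesis using iq cq xne by simp
    next
      case True
      then obtain d where d: "lt d a" "lt x (gam (H d))" using cof by blast
      have nl: "\<not> (oLimit r x \<and> le x (gam (H d)))" using x lt_imp_le[OF True] by simp
      have "idx q x = idx (H d) x \<and> cl q x = cl (H d) x" using agr[OF d(1) lt_imp_le[OF d(2)]] .
      thus ?thesis using P7[OF Hp[OF d(1)] nl] P7'[OF Hp[OF d(1)] nl] by simp
    qed
  next
    show "lt (idx q \<gamma>) k" using iqG ZZ_lt_k by simp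
  next
    fix i assume "le (idx q \<gamma>) i" "lt i k"
    hence ik: "lt i k" by simp
    show "clubIn r (cl q \<gamma> i) \<gamma>" unfolding cqG[OF ik]
    proof (rule clubI)
      fix c assume "c \<in> U i"
      then obtain e where e: "e \<in> Ev a" "c \<in> C e i" using U_def' by blast
      show "lt c \<gamma>" using lt_trans[OF Csub[OF e] strict[OF Eva[OF e(1)]]] .
    next
      fix b assume "lt b \<gamma>"
      then obtain e where e: "e \<in> Ev a" "lt b (gam (H e))" using cofE by blast
      have "gam (H e) \<in> U i" using gU[OF e(1) ik] unfolding derivedSet_def by simp
      thus "\<exists>c\<in>U i. lt b c" using e(2) by blast
    next
      fix b assume b: "lt b \<gamma>" "\<not> ozero r b" "supEq r (U i) b"
      obtain e where e: "e \<in> Ev a" "lt b (gam (H e))" using cofE[OF b(1)] by blast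
      have "supEq r (U i \<inter> {d. lt d (gam (H e))}) b" using supEq_restrict[OF lt_imp_le[OF e(2)]] b(3) by blast
      hence "supEq r (C e i) b" using Ur[OF e(1) ik] by simp
      hence "b \<in> C e i" using club_closed[OF Cclub[OF e(1) ik] e(2) b(2)] by blast
      thus "b \<in> U i" using U_def' e(1) by blast
    qed
  next
    fix i i' assume "le (idx q \<gamma>) i" "lt i i'" "lt i' k"
    hence ii: "le i i'" and ik: "lt i k" and ik': "lt i' k" using lt_imp_le lt_trans by blast+
    have "U i \<subseteq> U i'" unfolding U_def' using Cmono[OF _ ii ik'] by blast
    thus "cl q \<gamma> i \<subseteq> cl q \<gamma> i'" using cqG[OF ik] cqG[OF ik'] by simp
  next
    fix i assume "\<not> (le (idx q \<gamma>) i \<and> lt i k)"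
    hence "\<not> lt i k" using iqG ZZ_le by simp
    thus "cl q \<gamma> i = {}" using cq by simp
  next
    fix a' i assume a': "oLimit r a'" "lt a' \<gamma>" "le (idx q \<gamma>) i" "lt i k" "a' \<in> derivedSet r (cl q \<gamma> i)"
    obtain e where e: "e \<in> Ev a" "lt a' (gam (H e))" using cofE[OF a'(2)] by blast
    have "a' \<in> derivedSet r (C e i)"
      using derived_restrict[OF e(2) Ur[OF e(1) a'(4), symmetric]] a'(5) cqG[OF a'(4)] by simp
    hence P: "le (idx (H e) a') i \<and> C e i \<inter> {d. lt d a'} = cl (H e) a' i"
      using P5[OF Hp[OF Eva[OF e(1)]] a'(1) Clim[OF e(1)] e(2) le_refl _ a'(4)] HevI[OF e(1)] ZZ_le
      unfolding C_def by simp
    have A: "idx q a' = idx (H e) a' \<and> cl q a' = cl (H e) a'" using agr[OF Eva[OF e(1)] lt_imp_le[OF e(2)]] .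
    have "U i \<inter> {d. lt d a'} = C e i \<inter> {d. lt d a'}"
    proof -
      have "U i \<inter> {d. lt d a'} = (U i \<inter> {d. lt d (gam (H e))}) \<inter> {d. lt d a'}" using e(2) lt_trans by blast
      thus ?thesis using Ur[OF e(1) a'(4)] by simp
    qed
    thus "le (idx q a') i \<and> cl q \<gamma> i \<inter> {d. lt d a'} = cl q a' i" using P A cqG[OF a'(4)] by simp
  next
    fix a' assume a': "oLimit r a'" "lt a' \<gamma>"
    obtain e where e: "e \<in> Ev a" "lt a' (gam (H e))" using cofE[OF a'(2)] by blast
    obtain i where i: "le (idx (H e) (gam (H e))) i" "lt i k" "a' \<in> derivedSet r (C e i)"
      using P6[OF Hp[OF Eva[OF e(1)]] a'(1) Clim[OF e(1)] e(2) le_refl] unfolding C_def by blast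
    have "a' \<in> derivedSet r (U i)"
      using derived_restrict[OF e(2) Ur[OF e(1) i(2), symmetric]] i(3) by simp
    thus "\<exists>i. le (idx q \<gamma>) i \<and> lt i k \<and> a' \<in> derivedSet r (cl q \<gamma> i)"
      using cqG[OF i(2)] i(2) iqG ZZ_le[of i] by (intro exI[of _ i]) simp
  qed
  show "inP r k (LC H a)" using inq unfolding q_def .
  show "\<And>d. lt d a \<Longrightarrow> leP r k (LC H a) (H d)"
  proof -
    fix d assume d: "lt d a"
    have "leP r k q (H d)"
    proof (rule agree_le)
      show "le (gam (H d)) (gam q)" using ub[OF d] gq by simp
      fix x assume "le x (gam (H d))" thus "idx q x = idx (H d) x \<and> cl q x = cl (H d) x" using agr[OF d] by blast
    qed
    thus "leP r k (LC H a) (H d)" unfolding q_def .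
  qed
  show "idx (LC H a) (gam (LC H a)) = ZZ" using iqG gq unfolding q_def by simp
  show "oLimit r (gam (LC H a))" using gL gq unfolding q_def by simp
  show "\<And>d. lt d a \<Longrightarrow> lt (gam (H d)) (gam (LC H a))" using strict gq unfolding q_def by simp
  show "\<And>e. e \<in> Ev a \<Longrightarrow> gam (H e) \<in> derivedSet r (cl (LC H a) (gam (LC H a)) ZZ)"
    using gU[OF _ ZZ_lt_k] cqG[OF ZZ_lt_k] gq unfolding q_def by simp
qed

end



context W2 begin

definition sig :: "'a \<Rightarrow> ('a \<Rightarrow> 'a cond) \<Rightarrow> 'a cond" where
  "sig a H = (if oLimit r a then LC H a else SC (H (THE c. oSucc r c (THE b. oSucc r b a))) (H (THE b. oSucc r b a)))"

abbreviation legal where "legal h a \<equiv> legalPartial r (PP r k) (leP r k) (oneP r) sig h a"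

lemma legalD:
  assumes "legal h a"
  shows "\<And>d. lt d a \<Longrightarrow> inP r k (h d)"
    "\<And>d d'. lt d d' \<Longrightarrow> lt d' a \<Longrightarrow> leP r k (h d') (h d)"
    "\<And>d. lt d a \<Longrightarrow> ozero r d \<Longrightarrow> h d = oneP r"
    "\<And>d. lt d a \<Longrightarrow> oEven r d \<Longrightarrow> \<not> ozero r d \<Longrightarrow> h d = sig d (hist r h d)"
  using assms unfolding legalPartial_def PP_def by auto

lemma legal_mono: "legal h a \<Longrightarrow> lt d a \<Longrightarrow> legal h d"
  unfolding legalPartial_def using lt_trans by blast

lemma hist_eq: "lt d a \<Longrightarrow> hist r h a d = h d" unfolding hist_def by simp

lemma leP_trans:
  assumes "inP r k p1" "inP r k p2" "inP r k p3" "leP r k p3 p2" "leP r k p2 p1"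
  shows "leP r k p3 p1"
proof (rule agree_le)
  have "le (gam p1) (gam p2)" "le (gam p2) (gam p3)" using assms(4,5) unfolding leP_def by auto
  thus "le (gam p1) (gam p3)" using le_trans by blast
  fix x assume x: "le x (gam p1)"
  have "idx p2 x = idx p1 x" "cl p2 x = cl p1 x" using le_agree[OF assms(1) assms(2) assms(5) x] by auto
  moreover have x2: "le x (gam p2)" using le_trans[OF x] assms(5) unfolding leP_def by blast
  have "idx p3 x = idx p2 x" "cl p3 x = cl p2 x" using le_agree[OF assms(2) assms(3) assms(4) x2] by auto
  ultimately show "idx p3 x = idx p1 x \<and> cl p3 x = cl p1 x" by simp
qed

lemma gam_one: "ozero r (gam (oneP r))"
  unfolding oneP_def gam_def using ex_zero someI_ex by (metis fst_conv)

definition Inv where "Inv a h q \<longleftrightarrow> inP r k q \<and> (\<forall>d. lt d a \<longrightarrow> leP r k q (h d)) \<and> oLimit r (gam q)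
   \<and> idx q (gam q) = ZZ \<and> (\<forall>d. lt d a \<longrightarrow> lt (gam (h d)) (gam q))
   \<and> (\<forall>e. e \<in> Ev a \<longrightarrow> gam (h e) \<in> derivedSet r (cl q (gam q) ZZ))"

lemma main_inv: "oEven r a \<Longrightarrow> \<not> ozero r a \<Longrightarrow> legal h a \<Longrightarrow> Inv a h (sig a (hist r h a))"
proof (induct a arbitrary: h rule: lt_induct)
  case (less a)
  note IH = less.hyps and aE = less.prems(1) and anz = less.prems(2) and lg = less.prems(3)
  note L = legalD[OF lg]
  have IHe: "Inv e h (h e)" if e: "e \<in> Ev a" for e
  proof -
    have ea: "lt e a" "oEven r e" "\<not> ozero r e" using e unfolding Ev_def by auto
    have "Inv e h (sig e (hist r h e))" using IH[OF ea(1) ea(2) ea(3) legal_mono[OF lg ea(1)]] .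
    thus ?thesis using L(4)[OF ea] by simp
  qed
  define H where "H = hist r h a"
  have Hh: "\<And>d. lt d a \<Longrightarrow> H d = h d" unfolding H_def using hist_eq by blast
  show ?case
  proof (cases "oLimit r a")
    case aL: True
    have sg: "sig a H = LC H a" using aL unfolding sig_def by simp
    have Hp: "\<And>d. lt d a \<Longrightarrow> inP r k (H d)" using L(1) Hh by simp
    have Hdec: "\<And>d d'. lt d d' \<Longrightarrow> lt d' a \<Longrightarrow> leP r k (H d') (H d)" using L(2) Hh lt_trans by metis
    have Eva: "\<And>e. e \<in> Ev a \<Longrightarrow> lt e a" unfolding Ev_def by simp
    have HevL: "\<And>e. e \<in> Ev a \<Longrightarrow> oLimit r (gam (H e))" using IHe Hh Eva unfolding Inv_def by simp
    have HevI: "\<And>e. e \<in> Ev a \<Longrightarrow> idx (H e) (gam (H e)) = ZZ" using IHe Hh Eva unfolding Inv_def by simp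
    have HevS: "\<And>e d. e \<in> Ev a \<Longrightarrow> lt d e \<Longrightarrow> lt (gam (H d)) (gam (H e))"
    proof -
      fix e d assume e: "e \<in> Ev a" "lt d e"
      have "lt (gam (h d)) (gam (h e))" using IHe[OF e(1)] e(2) unfolding Inv_def by blast
      thus "lt (gam (H d)) (gam (H e))" using Hh[OF Eva[OF e(1)]] Hh[OF lt_trans[OF e(2) Eva[OF e(1)]]] by simp
    qed
    have HevT: "\<And>e e'. e \<in> Ev a \<Longrightarrow> e' \<in> Ev a \<Longrightarrow> lt e' e \<Longrightarrow> gam (H e') \<in> derivedSet r (cl (H e) (gam (H e)) ZZ)"
    proof -
      fix e e' assume e: "e \<in> Ev a" "e' \<in> Ev a" "lt e' e"
      have "e' \<in> Ev e" using e unfolding Ev_def by simp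
      hence "gam (h e') \<in> derivedSet r (cl (h e) (gam (h e)) ZZ)" using IHe[OF e(1)] unfolding Inv_def by blast
      thus "gam (H e') \<in> derivedSet r (cl (H e) (gam (H e)) ZZ)" using Hh Eva e by simp
    qed
    have LP1: "inP r k (LC H a)"
      by (rule LC_props(1)[of a H]) (simp_all add: aL Hp Hdec HevL HevI HevS HevT)
    have LP2: "\<And>d. lt d a \<Longrightarrow> leP r k (LC H a) (H d)"
      by (rule LC_props(2)[of a H]) (simp_all add: aL Hp Hdec HevL HevI HevS HevT)
    have LP3: "idx (LC H a) (gam (LC H a)) = ZZ"
      by (rule LC_props(3)[of a H]) (simp_all add: aL Hp Hdec HevL HevI HevS HevT)
    have LP4: "oLimit r (gam (LC H a))"
      by (rule LC_props(4)[of a H]) (simp_all add: aL Hp Hdec HevL HevI HevS HevT)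
    have LP5: "\<And>d. lt d a \<Longrightarrow> lt (gam (H d)) (gam (LC H a))"
      by (rule LC_props(5)[of a H]) (simp_all add: aL Hp Hdec HevL HevI HevS HevT)
    have LP6: "\<And>e. e \<in> Ev a \<Longrightarrow> gam (H e) \<in> derivedSet r (cl (LC H a) (gam (LC H a)) ZZ)"
      by (rule LC_props(6)[of a H]) (simp_all add: aL Hp Hdec HevL HevI HevS HevT)
    have i2: "\<forall>d. lt d a \<longrightarrow> leP r k (LC H a) (h d)"
    proof (intro allI impI)
      fix d assume d: "lt d a" thus "leP r k (LC H a) (h d)" using LP2[OF d] Hh[OF d] by simp
    qed
    have i5: "\<forall>d. lt d a \<longrightarrow> lt (gam (h d)) (gam (LC H a))"
    proof (intro allI impI)
      fix d assume d: "lt d a" thus "lt (gam (h d)) (gam (LC H a))" using LP5[OF d] Hh[OF d] by simp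
    qed
    have i6: "\<forall>e. e \<in> Ev a \<longrightarrow> gam (h e) \<in> derivedSet r (cl (LC H a) (gam (LC H a)) ZZ)"
    proof (intro allI impI)
      fix e assume e: "e \<in> Ev a" thus "gam (h e) \<in> derivedSet r (cl (LC H a) (gam (LC H a)) ZZ)"
        using LP6[OF e] Hh[OF Eva[OF e]] by simp
    qed
    have "Inv a h (LC H a)" unfolding Inv_def using LP1 i2 LP4 LP3 i5 i6 by blast
    thus ?thesis using sg unfolding H_def by simp
  next
    case False
    from even_cases[OF aE] False anz obtain b c where bc: "oEven r c" "oSucc r c b" "oSucc r b a" by blast
    have tb: "(THE b. oSucc r b a) = b" using bc(3) oSucc_unique1 by blast
    have tc: "(THE c. oSucc r c b) = c" using bc(2) oSucc_unique1 by blast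
    have sg: "sig a H = SC (H c) (H b)" using False tb tc unfolding sig_def by simp
    have ba: "lt b a" using oSucc_lt[OF bc(3)] .
    have cb: "lt c b" using oSucc_lt[OF bc(2)] .
    have ca: "lt c a" using lt_trans[OF cb ba] .
    have pc: "inP r k (h c)" using L(1)[OF ca] .
    have pb: "inP r k (h b)" using L(1)[OF ba] .
    have bcle: "leP r k (h b) (h c)" using L(2)[OF cb ba] .
    have ic: "oLimit r (gam (h c)) \<Longrightarrow> idx (h c) (gam (h c)) = ZZ"
    proof (cases "ozero r c")
      case True
      hence "h c = oneP r" using L(3)[OF ca] by simp
      thus "oLimit r (gam (h c)) \<Longrightarrow> idx (h c) (gam (h c)) = ZZ" using gam_one limit_not_zero by simp
    next
      case False
      have "c \<in> Ev a" using False bc(1) ca unfolding Ev_def by simp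
      thus "oLimit r (gam (h c)) \<Longrightarrow> idx (h c) (gam (h c)) = ZZ" using IHe unfolding Inv_def by blast
    qed
    note S = SC_props[where pc="h c" and pb="h b", OF pc pb bcle ic]
    define q where "q = SC (h c) (h b)"
    have sgq: "sig a (hist r h a) = q" using sg Hh[OF ba] Hh[OF ca] unfolding H_def q_def by simp
    have q1: "inP r k q" using S(1) unfolding q_def .
    have dle: "le d b" if "lt d a" for d using oSucc_pred_le[OF bc(3) that] .
    have q2: "leP r k q (h d)" if d: "lt d a" for d
    proof (cases "d = b")
      case True thus ?thesis using S(2) unfolding q_def by simp
    next
      case False
      hence db: "lt d b" using dle[OF d] unfolding olt_def by simp
      show ?thesis using leP_trans[OF L(1)[OF d] pb q1 _ L(2)[OF db ba]] S(2) unfolding q_def by simp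
    qed
    have q5: "lt (gam (h d)) (gam q)" if d: "lt d a" for d
    proof -
      have "le (gam (h d)) (gam (h b))"
      proof (cases "d = b")
        case False
        hence db: "lt d b" using dle[OF d] unfolding olt_def by simp
        thus ?thesis using L(2)[OF db ba] unfolding leP_def by simp
      qed simp
      thus ?thesis using le_lt_trans S(6) unfolding q_def by blast
    qed
    have q6: "gam (h e) \<in> derivedSet r (cl q (gam q) ZZ)" if e: "e \<in> Ev a" for e
    proof -
      have ea: "lt e a" "oEven r e" "\<not> ozero r e" using e unfolding Ev_def by auto
      have bne: "\<not> oEven r b" using succ_even_not_even[OF bc(1) bc(2)] .
      have "e \<noteq> b" using ea(2) bne by auto
      hence eb: "lt e b" using dle[OF ea(1)] unfolding olt_def by simp
      have ec: "le e c" using oSucc_pred_le[OF bc(2) eb] .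
      have cE: "c \<in> Ev a" if ne: "e \<noteq> c"
      proof -
        have "\<not> ozero r c"
        proof
          assume "ozero r c" hence "le c e" unfolding ozero_def by simp
          hence "c = e" using le_antisym[OF _ ec] by simp
          thus False using ne by simp
        qed
        thus ?thesis using ca bc(1) unfolding Ev_def by simp
      qed
      have gl: "oLimit r (gam (h c))" if "c \<in> Ev a" using IHe[OF that] unfolding Inv_def by blast
      show ?thesis
      proof (cases "e = c")
        case True
        have cEv: "c \<in> Ev a" using True e by simp
        have glc: "oLimit r (gam (h c))" using gl[OF cEv] .
        have X: "gam (h c) \<in> derivedSet r (cl (SC (h c) (h b)) (gam (SC (h c) (h b))) ZZ)"
          using S(7) glc by simp
        show ?thesis using X True unfolding q_def by simp
      next
        case False
        have cEv: "c \<in> Ev a" using cE False by simp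
        have ec': "lt e c" using ec False unfolding olt_def by simp
        have "e \<in> Ev c" using ea ec' unfolding Ev_def by simp
        hence t: "gam (h e) \<in> derivedSet r (cl (h c) (gam (h c)) ZZ)" using IHe[OF cEv] unfolding Inv_def by blast
        have lt': "lt (gam (h e)) (gam (h c))" using IHe[OF cEv] ec' unfolding Inv_def by blast
        have glc: "oLimit r (gam (h c))" using gl[OF cEv] .
        have "cl q (gam q) ZZ \<inter> {d. lt d (gam (h c))} = cl (h c) (gam (h c)) ZZ" using S(7) glc unfolding q_def by simp
        thus ?thesis using derived_restrict[OF lt'] t by blast
      qed
    qed
    have s4: "idx q (gam q) = ZZ" using S(4) unfolding q_def .
    have s5: "oLimit r (gam q)" using S(5) unfolding q_def .
    have "Inv a h q" unfolding Inv_def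
    proof (intro conjI allI impI)
      show "inP r k q" by (rule q1)
      show "oLimit r (gam q)" by (rule s5)
      show "idx q (gam q) = ZZ" by (rule s4)
    next
      fix d assume "lt d a" thus "leP r k q (h d)" by (rule q2)
    next
      fix d assume "lt d a" thus "lt (gam (h d)) (gam q)" by (rule q5)
    next
      fix e assume "e \<in> Ev a" thus "gam (h e) \<in> derivedSet r (cl q (gam q) ZZ)" by (rule q6)
    qed
    thus ?thesis using sgq by simp
  qed
qed

lemma winning: "winningII r (PP r k) (leP r k) (oneP r) sig"
  unfolding winningII_def
proof (intro allI impI)
  fix h a assume a: "oEven r a \<and> \<not> ozero r a \<and> legal h a"
  hence "Inv a h (sig a (hist r h a))" using main_inv by blast
  thus "sig a (hist r h a) \<in> PP r k \<and> (\<forall>d. lt d a \<longrightarrow> leP r k (sig a (hist r h a)) (h d))"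
    unfolding Inv_def PP_def by blast
qed

end

theorem mainTheorem19:
  fixes r :: "'a rel" and k :: 'a
  assumes "card_order r" and "Cinfinite r" and "regularCard r"
    and "Card_order (Restr r (underS r k))"
    and "Cinfinite (Restr r (underS r k))"
    and "regularCard (Restr r (underS r k))"
  shows "strategically_closed r (PP r k) (leP r k) (oneP r)"
proof -
  have wo: "well_order_on UNIV r" using assms(1) card_order_on_well_order_on by blast
  have "\<not> finite (Field (Restr r (underS r k)))" using assms(5) unfolding cinfinite_def by simp
  moreover have "Field (Restr r (underS r k)) \<subseteq> underS r k" unfolding Field_def by auto
  ultimately have kinf: "infinite (underS r k)" using finite_subset by blast
  interpret W2 r k
    by (unfold_locales) (rule wo, rule assms(1), rule assms(3), rule kinf)
  show ?thesis unfolding strategically_closed_def using winning by blast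
qed

end
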